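(* Let $\Sigma$ be a fan of rational simplicial cones in $\Lambda_{\mathbb Q}$ whose support is the entire positive Weyl chamber $\Lambda^+_{\mathbb Q}$. If $\Sigma$ is a normal fan, then $W\Sigma$ is a normal fan.
   Context: $G$ is a split reductive group with maximal torus $T$, cocharacter lattice $\Lambda$, Weyl group $W$ acting on $\Lambda_{\mathbb Q}=\Lambda\otimes\mathbb Q$, and positive Weyl chamber $\Lambda^+_{\mathbb Q}$. $W\Sigma$ denotes the fan consisting of all cones $w\sigma$ for $w\in W$, $\sigma\in\Sigma$. A rational polyhedral fan is a normal fan if it consists of the normal cones of some polyhedron, equivalently if its support is convex and admits a strictly convex piecewise linear function to $\mathbb Q$ that is linear on each cone of the fan. *)

theory Defs
  imports Complex_Main
begin

text \<open>
  The cocharacter lattice of the split maximal torus is identified with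
  the functions 'n => int for a finite index type 'n (a basis of Lambda), the character
  lattice with its dual, also 'n => int, paired by the standard pairing.
  Lambda_Q is 'n => rat.  A split reductive group is recorded through its (reduced)
  root datum (roots Phi in the characters, coroot map cor into the cocharacters);
  every reduced root datum comes from a split reductive group and conversely.
\<close>

definition pair :: "('n::finite \<Rightarrow> rat) \<Rightarrow> ('n \<Rightarrow> rat) \<Rightarrow> rat" where
  "pair u x = (\<Sum>i\<in>UNIV. u i * x i)"

definition ipair :: "('n::finite \<Rightarrow> int) \<Rightarrow> ('n \<Rightarrow> int) \<Rightarrow> int" where
  "ipair a x = (\<Sum>i\<in>UNIV. a i * x i)"

definition refl_char :: "('n::finite \<Rightarrow> int) \<Rightarrow> ('n \<Rightarrow> int) \<Rightarrow> ('n \<Rightarrow> int) \<Rightarrow> ('n \<Rightarrow> int)" where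
  "refl_char a acv chi = (\<lambda>i. chi i - ipair chi acv * a i)"

definition refl_cochar :: "('n::finite \<Rightarrow> int) \<Rightarrow> ('n \<Rightarrow> int) \<Rightarrow> ('n \<Rightarrow> int) \<Rightarrow> ('n \<Rightarrow> int)" where
  "refl_cochar a acv lam = (\<lambda>i. lam i - ipair a lam * acv i)"

definition root_datum :: "('n::finite \<Rightarrow> int) set \<Rightarrow> (('n \<Rightarrow> int) \<Rightarrow> ('n \<Rightarrow> int)) \<Rightarrow> bool" where
  "root_datum Phi cor \<longleftrightarrow>
     finite Phi \<and> inj_on cor Phi \<and>
     (\<forall>a\<in>Phi. ipair a (cor a) = 2) \<and>
     (\<forall>a\<in>Phi. \<forall>b\<in>Phi. refl_char a (cor a) b \<in> Phi) \<and>
     (\<forall>a\<in>Phi. \<forall>b\<in>Phi. refl_cochar a (cor a) (cor b) \<in> cor ` Phi)"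

definition reduced_root_datum :: "('n::finite \<Rightarrow> int) set \<Rightarrow> (('n \<Rightarrow> int) \<Rightarrow> ('n \<Rightarrow> int)) \<Rightarrow> bool" where
  "reduced_root_datum Phi cor \<longleftrightarrow> root_datum Phi cor \<and> (\<forall>a\<in>Phi. (\<lambda>i. 2 * a i) \<notin> Phi)"

definition refl_Q :: "('n::finite \<Rightarrow> int) \<Rightarrow> ('n \<Rightarrow> int) \<Rightarrow> ('n \<Rightarrow> rat) \<Rightarrow> ('n \<Rightarrow> rat)" where
  "refl_Q a acv x = (\<lambda>i. x i - pair (\<lambda>j. of_int (a j)) x * of_int (acv i))"

inductive_set weyl_group :: "('n::finite \<Rightarrow> int) set \<Rightarrow> (('n \<Rightarrow> int) \<Rightarrow> ('n \<Rightarrow> int))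
    \<Rightarrow> (('n \<Rightarrow> rat) \<Rightarrow> ('n \<Rightarrow> rat)) set"
  for Phi cor where
  id: "id \<in> weyl_group Phi cor"
| refl: "w \<in> weyl_group Phi cor \<Longrightarrow> a \<in> Phi \<Longrightarrow> refl_Q a (cor a) \<circ> w \<in> weyl_group Phi cor"

text \<open>positive Weyl chamber, for the positive system determined by a regular element v\<close>
definition regular :: "('n::finite \<Rightarrow> int) set \<Rightarrow> ('n \<Rightarrow> rat) \<Rightarrow> bool" where
  "regular Phi v \<longleftrightarrow> (\<forall>a\<in>Phi. pair (\<lambda>j. of_int (a j)) v \<noteq> 0)"

definition positive_roots :: "('n::finite \<Rightarrow> int) set \<Rightarrow> ('n \<Rightarrow> rat) \<Rightarrow> ('n \<Rightarrow> int) set" where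
  "positive_roots Phi v = {a\<in>Phi. pair (\<lambda>j. of_int (a j)) v > 0}"

definition pos_chamber :: "('n::finite \<Rightarrow> int) set \<Rightarrow> ('n \<Rightarrow> rat) \<Rightarrow> ('n \<Rightarrow> rat) set" where
  "pos_chamber Phi v = {x. \<forall>a\<in>positive_roots Phi v. pair (\<lambda>j. of_int (a j)) x \<ge> 0}"

definition cone_gen :: "('n::finite \<Rightarrow> rat) set \<Rightarrow> ('n \<Rightarrow> rat) set" where
  "cone_gen S = {x. \<exists>c. (\<forall>s\<in>S. c s \<ge> 0) \<and> x = (\<lambda>i. \<Sum>s\<in>S. c s * s i)}"

definition lin_indep :: "('n::finite \<Rightarrow> rat) set \<Rightarrow> bool" where
  "lin_indep S \<longleftrightarrow> (\<forall>c. (\<lambda>i. \<Sum>s\<in>S. c s * s i) = (\<lambda>i. 0) \<longrightarrow> (\<forall>s\<in>S. c s = 0))"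

definition polyhedral_cone :: "('n::finite \<Rightarrow> rat) set \<Rightarrow> bool" where
  "polyhedral_cone C \<longleftrightarrow> (\<exists>S. finite S \<and> C = cone_gen S)"

definition simplicial_cone :: "('n::finite \<Rightarrow> rat) set \<Rightarrow> bool" where
  "simplicial_cone C \<longleftrightarrow> (\<exists>S. finite S \<and> lin_indep S \<and> C = cone_gen S)"

definition face_of_cone :: "('n::finite \<Rightarrow> rat) set \<Rightarrow> ('n \<Rightarrow> rat) set \<Rightarrow> bool" where
  "face_of_cone F C \<longleftrightarrow> (\<exists>u. (\<forall>x\<in>C. pair u x \<ge> 0) \<and> F = {x\<in>C. pair u x = 0})"

definition fan :: "('n::finite \<Rightarrow> rat) set set \<Rightarrow> bool" where
  "fan Sig \<longleftrightarrow> finite Sig \<and> (\<forall>C\<in>Sig. polyhedral_cone C) \<and>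
     (\<forall>C\<in>Sig. \<forall>F. face_of_cone F C \<longrightarrow> F \<in> Sig) \<and>
     (\<forall>C\<in>Sig. \<forall>D\<in>Sig. face_of_cone (C \<inter> D) C \<and> face_of_cone (C \<inter> D) D)"

definition support :: "('n::finite \<Rightarrow> rat) set set \<Rightarrow> ('n \<Rightarrow> rat) set" where
  "support Sig = \<Union>Sig"

definition convex_set :: "('n::finite \<Rightarrow> rat) set \<Rightarrow> bool" where
  "convex_set S \<longleftrightarrow> (\<forall>x\<in>S. \<forall>y\<in>S. \<forall>t::rat. 0 \<le> t \<and> t \<le> 1 \<longrightarrow> (\<lambda>i. t * x i + (1 - t) * y i) \<in> S)"

definition strictly_convex_pl :: "('n::finite \<Rightarrow> rat) set set \<Rightarrow> (('n \<Rightarrow> rat) \<Rightarrow> rat) \<Rightarrow> bool" where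
  "strictly_convex_pl Sig f \<longleftrightarrow>
     (\<forall>C\<in>Sig. \<exists>u. \<forall>x\<in>C. f x = pair u x) \<and>
     (\<forall>x\<in>support Sig. \<forall>y\<in>support Sig. \<forall>t::rat. 0 \<le> t \<and> t \<le> 1 \<longrightarrow>
         f (\<lambda>i. t * x i + (1 - t) * y i) \<le> t * f x + (1 - t) * f y) \<and>
     (\<forall>C\<in>Sig. \<exists>u. \<forall>x\<in>support Sig. pair u x \<le> f x \<and> (pair u x = f x \<longleftrightarrow> x \<in> C))"

definition normal_fan :: "('n::finite \<Rightarrow> rat) set set \<Rightarrow> bool" where
  "normal_fan Sig \<longleftrightarrow> fan Sig \<and> convex_set (support Sig) \<and> (\<exists>f. strictly_convex_pl Sig f)"

definition weyl_fan :: "('n::finite \<Rightarrow> int) set \<Rightarrow> (('n \<Rightarrow> int) \<Rightarrow> ('n \<Rightarrow> int))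
    \<Rightarrow> ('n \<Rightarrow> rat) set set \<Rightarrow> ('n \<Rightarrow> rat) set set" where
  "weyl_fan Phi cor Sig = {w ` C | w C. w \<in> weyl_group Phi cor \<and> C \<in> Sig}"

end

theory Submission
  imports Defs
begin


definition R :: "('n::finite \<Rightarrow> int) \<Rightarrow> ('n \<Rightarrow> rat)" where
  "R a = (\<lambda>j. of_int (a j))"

lemma pair_comm: "pair u x = pair x u"
  unfolding pair_def by (simp add: mult.commute)

lemma pair_add2: "pair u (\<lambda>i. x i + y i) = pair u x + pair u y"
  unfolding pair_def by (simp add: distrib_left sum.distrib)

lemma pair_diff2: "pair u (\<lambda>i. x i - y i) = pair u x - pair u y"
  unfolding pair_def by (simp add: right_diff_distrib sum_subtractf)

lemma pair_scale2: "pair u (\<lambda>i. c * x i) = c * pair u x"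
  unfolding pair_def by (simp add: sum_distrib_left algebra_simps)

lemma pair_add1: "pair (\<lambda>i. x i + y i) u = pair x u + pair y u"
  by (subst (1 2 3) pair_comm) (rule pair_add2)
lemma pair_diff1: "pair (\<lambda>i. x i - y i) u = pair x u - pair y u"
  by (subst (1 2 3) pair_comm) (rule pair_diff2)
lemma pair_scale1: "pair (\<lambda>i. c * x i) u = c * pair x u"
  by (subst (1 2) pair_comm) (rule pair_scale2)

lemma pair_sum2: "pair u (\<lambda>i. \<Sum>s\<in>S. f s i) = (\<Sum>s\<in>S. pair u (f s))"
  unfolding pair_def by (simp add: sum_distrib_left sum.swap[of _ S])
lemma pair_sum1: "pair (\<lambda>i. \<Sum>s\<in>S. f s i) u = (\<Sum>s\<in>S. pair (f s) u)"
  by (subst pair_comm, subst pair_sum2, simp add: pair_comm)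

lemma pair_zero2[simp]: "pair u (\<lambda>i. 0) = 0" unfolding pair_def by simp
lemma pair_zero1[simp]: "pair (\<lambda>i. 0) u = 0" unfolding pair_def by simp

definition ev :: "'n::finite \<Rightarrow> ('n \<Rightarrow> rat)" where "ev k = (\<lambda>j. if j = k then 1 else 0)"
lemma pair_ev: "pair (ev k) x = x k"
  unfolding pair_def ev_def by (simp add: if_distrib[of "\<lambda>t. t * x _"] cong: if_cong)

lemma vec_eq_pair: assumes "\<And>u. pair u x = pair u y" shows "x = y"
proof
  fix k show "x k = y k" using assms[of "ev k"] by (simp add: pair_ev)
qed

lemma pair_R: "pair (R a) (R b) = of_int (ipair a b)"
  unfolding pair_def R_def ipair_def by simp



lemma R_inj: "R a = R b \<Longrightarrow> a = b"
  unfolding R_def by (metis of_int_eq_iff ext)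

lemma sum_invol:
  assumes "\<And>x. x \<in> S \<Longrightarrow> t x \<in> S" "\<And>x. x \<in> S \<Longrightarrow> t (t x) = x"
  shows "(\<Sum>x\<in>S. g (t x)) = (\<Sum>x\<in>S. g x)"
  by (rule sum.reindex_bij_witness[where i=t and j=t]) (use assms in auto)

locale rdat =
  fixes Phi :: "('n::finite \<Rightarrow> int) set" and cor :: "('n \<Rightarrow> int) \<Rightarrow> ('n \<Rightarrow> int)"
    and v :: "'n \<Rightarrow> rat"
  assumes red: "reduced_root_datum Phi cor" and reg: "regular Phi v"
begin

abbreviation "cr a \<equiv> R (cor a)"
abbreviation "sr a \<equiv> refl_Q a (cor a)"
definition sT :: "('n \<Rightarrow> int) \<Rightarrow> ('n \<Rightarrow> rat) \<Rightarrow> ('n \<Rightarrow> rat)" where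
  "sT a \<chi> = (\<lambda>i. \<chi> i - pair \<chi> (cr a) * R a i)"
abbreviation "sg a b \<equiv> refl_char a (cor a) b"

lemma fin: "finite Phi" and cor_inj: "inj_on cor Phi"
  and two: "a \<in> Phi \<Longrightarrow> ipair a (cor a) = 2"
  and sg_in: "a \<in> Phi \<Longrightarrow> b \<in> Phi \<Longrightarrow> sg a b \<in> Phi"
  and cosg_in: "a \<in> Phi \<Longrightarrow> b \<in> Phi \<Longrightarrow> refl_cochar a (cor a) (cor b) \<in> cor ` Phi"
  and reduced: "a \<in> Phi \<Longrightarrow> (\<lambda>i. 2 * a i) \<notin> Phi"
  using red unfolding reduced_root_datum_def root_datum_def by auto

lemma two_Q: "a \<in> Phi \<Longrightarrow> pair (R a) (cr a) = 2"
  using two by (simp add: pair_R)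

lemma sr_def: "sr a x = (\<lambda>i. x i - pair (R a) x * cr a i)"
  unfolding refl_Q_def R_def by simp

lemma pair_sr: "pair \<chi> (sr a x) = pair (sT a \<chi>) x"
  unfolding sr_def sT_def pair_diff2 pair_scale2 pair_diff1 pair_scale1
  by (simp add: pair_comm)

lemma R_sg: "R (sg a b) = sT a (R b)"
  unfolding refl_char_def sT_def R_def
  by (simp add: pair_R[unfolded R_def] ipair_def mult.commute)

lemma R_cosg: "R (refl_cochar a (cor a) l) = sr a (R l)"
  unfolding refl_cochar_def sr_def R_def
  by (simp add: pair_R[unfolded R_def] ipair_def)

lemma sr_sr: assumes a: "a \<in> Phi" shows "sr a (sr a x) = x"
proof -
  have "pair (R a) (sr a x) = - pair (R a) x"
    unfolding sr_def pair_diff2 pair_scale2 using two_Q[OF a] by simp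
  then show ?thesis by (subst (1) sr_def) (simp add: sr_def)
qed

lemma sT_sT: assumes a: "a \<in> Phi" shows "sT a (sT a x) = x"
proof -
  have "pair (sT a x) (cr a) = - pair x (cr a)"
    unfolding sT_def pair_diff1 pair_scale1 using two_Q[OF a] by simp
  then show ?thesis by (subst (1) sT_def) (simp add: sT_def)
qed

lemma sg_sg: "a \<in> Phi \<Longrightarrow> sg a (sg a b) = b"
  by (rule R_inj) (simp add: R_sg sT_sT)

lemma cosg_cosg: "a \<in> Phi \<Longrightarrow> refl_cochar a (cor a) (refl_cochar a (cor a) l) = l"
  by (rule R_inj) (simp add: R_cosg sr_sr)

lemma sg_self: "a \<in> Phi \<Longrightarrow> sg a a = (\<lambda>i. - a i)"
  unfolding refl_char_def using two by auto

lemma neg_in: "a \<in> Phi \<Longrightarrow> (\<lambda>i. - a i) \<in> Phi"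
  using sg_in[of a a] sg_self by simp

lemma sr_lin: "sr a (\<lambda>i. c * x i + d * y i) = (\<lambda>i. c * sr a x i + d * sr a y i)"
  unfolding sr_def by (rule ext) (simp add: pair_add2 pair_scale2 algebra_simps)

lemma sr_diff: "sr a (\<lambda>i. x i - d * y i) = (\<lambda>i. sr a x i - d * sr a y i)"
  using sr_lin[of a 1 x "-d" y] by simp

lemma sT_self: "a \<in> Phi \<Longrightarrow> sT a (R a) = (\<lambda>i. - R a i)"
  unfolding sT_def by (simp add: pair_R two)

lemma sr_self: "a \<in> Phi \<Longrightarrow> sr a (cr a) = (\<lambda>i. - cr a i)"
  unfolding sr_def by (simp add: pair_R two)

definition Bs :: "('n \<Rightarrow> rat) \<Rightarrow> ('n \<Rightarrow> rat) \<Rightarrow> rat" where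
  "Bs x y = (\<Sum>b\<in>Phi. pair x (cr b) * pair y (cr b))"
definition Bc :: "('n \<Rightarrow> rat) \<Rightarrow> ('n \<Rightarrow> rat) \<Rightarrow> rat" where
  "Bc x y = (\<Sum>b\<in>Phi. pair (R b) x * pair (R b) y)"

lemma Bs_comm: "Bs x y = Bs y x" unfolding Bs_def by (simp add: mult.commute)
lemma Bc_comm: "Bc x y = Bc y x" unfolding Bc_def by (simp add: mult.commute)

lemma Bs_lin: "Bs (\<lambda>i. c * x i + d * y i) z = c * Bs x z + d * Bs y z"
  unfolding Bs_def pair_add1 pair_scale1 by (simp add: sum.distrib sum_distrib_left algebra_simps)
lemma Bc_lin: "Bc (\<lambda>i. c * x i + d * y i) z = c * Bc x z + d * Bc y z"
  unfolding Bc_def pair_add2 pair_scale2 by (simp add: sum.distrib sum_distrib_left algebra_simps)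

lemma sum_cosg:
  assumes a: "a \<in> Phi"
  shows "(\<Sum>b\<in>Phi. g (sr a (cr b))) = (\<Sum>b\<in>Phi. g (cr b))"
proof -
  let ?t = "refl_cochar a (cor a)"
  have "(\<Sum>b\<in>Phi. g (sr a (cr b))) = (\<Sum>b\<in>Phi. (\<lambda>c. g (R (?t c))) (cor b))"
    by (simp add: R_cosg)
  also have "\<dots> = (\<Sum>c\<in>cor ` Phi. g (R (?t c)))"
    by (rule sum.reindex[symmetric, unfolded comp_def]) (rule cor_inj)
  also have "\<dots> = (\<Sum>c\<in>cor ` Phi. g (R c))"
    by (rule sum_invol[where g="\<lambda>c. g (R c)"]) (use cosg_in[OF a] cosg_cosg[OF a] in auto)
  also have "\<dots> = (\<Sum>b\<in>Phi. g (cr b))"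
    by (rule sum.reindex[unfolded comp_def]) (rule cor_inj)
  finally show ?thesis .
qed

lemma Bs_inv: "a \<in> Phi \<Longrightarrow> Bs (sT a x) (sT a y) = Bs x y"
  unfolding Bs_def pair_sr[symmetric]
  using sum_cosg[of a "\<lambda>c. pair x c * pair y c"] by simp

lemma Bc_inv: "a \<in> Phi \<Longrightarrow> Bc (sr a x) (sr a y) = Bc x y"
proof -
  assume a: "a \<in> Phi"
  have "Bc (sr a x) (sr a y) = (\<Sum>b\<in>Phi. (\<lambda>b. pair (R b) x * pair (R b) y) (sg a b))"
    unfolding Bc_def pair_sr R_sg by simp
  also have "\<dots> = Bc x y" unfolding Bc_def
    by (rule sum_invol) (use sg_in[OF a] sg_sg[OF a] in auto)
  finally show ?thesis .
qed

lemma coroot_formula: assumes a: "a \<in> Phi"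
  shows "2 * Bs (R a) x = pair x (cr a) * Bs (R a) (R a)"
proof -
  have "Bs (R a) x = Bs (sT a (R a)) (sT a x)" using Bs_inv[OF a] by simp
  also have "sT a (R a) = (\<lambda>i. (-1) * R a i + 0 * R a i)" using sT_self[OF a] by simp
  also have "sT a x = (\<lambda>i. 1 * x i + (- pair x (cr a)) * R a i)" unfolding sT_def by simp
  finally have "Bs (R a) x = - (Bs (R a) x - pair x (cr a) * Bs (R a) (R a))"
    unfolding Bs_lin Bs_comm[of _ "\<lambda>i. 1 * x i + _ * R a i"] by (simp add: Bs_comm)
  then show ?thesis by simp
qed

lemma root_formula: assumes a: "a \<in> Phi"
  shows "2 * Bc (cr a) x = pair (R a) x * Bc (cr a) (cr a)"
proof -
  have "Bc (cr a) x = Bc (sr a (cr a)) (sr a x)" using Bc_inv[OF a] by simp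
  also have "sr a (cr a) = (\<lambda>i. (-1) * cr a i + 0 * cr a i)" using sr_self[OF a] by simp
  also have "sr a x = (\<lambda>i. 1 * x i + (- pair (R a) x) * cr a i)" unfolding sr_def by simp
  finally have "Bc (cr a) x = - (Bc (cr a) x - pair (R a) x * Bc (cr a) (cr a))"
    unfolding Bc_lin Bc_comm[of _ "\<lambda>i. 1 * x i + _ * cr a i"] by (simp add: Bc_comm)
  then show ?thesis by simp
qed

lemma Bs_pos: assumes a: "a \<in> Phi" shows "Bs (R a) (R a) \<ge> 4"
proof -
  have "4 = pair (R a) (cr a) * pair (R a) (cr a)" using two_Q[OF a] by simp
  also have "\<dots> \<le> Bs (R a) (R a)" unfolding Bs_def
    by (rule member_le_sum[of a Phi "\<lambda>b. pair (R a) (cr b) * pair (R a) (cr b)"]) (auto simp: a fin)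
  finally show ?thesis .
qed

lemma Bc_pos: assumes a: "a \<in> Phi" shows "Bc (cr a) (cr a) \<ge> 4"
proof -
  have "4 = pair (R a) (cr a) * pair (R a) (cr a)" using two_Q[OF a] by simp
  also have "\<dots> \<le> Bc (cr a) (cr a)" unfolding Bc_def
    by (rule member_le_sum[of a Phi "\<lambda>b. pair (R b) (cr a) * pair (R b) (cr a)"]) (auto simp: a fin)
  finally show ?thesis .
qed

lemma coroot_eq: "a \<in> Phi \<Longrightarrow> pair x (cr a) = 2 * Bs (R a) x / Bs (R a) (R a)"
  using coroot_formula[of a x] Bs_pos[of a] by (simp add: field_simps)

lemma cr_sg: assumes a: "a \<in> Phi" and b: "b \<in> Phi"
  shows "cr (sg b a) = sr b (cr a)"
proof (rule vec_eq_pair)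
  fix x
  have "pair x (cr (sg b a)) = 2 * Bs (sT b (R a)) x / Bs (sT b (R a)) (sT b (R a))"
    using coroot_eq[OF sg_in[OF b a]] R_sg by simp
  also have "Bs (sT b (R a)) x = Bs (R a) (sT b x)"
    using Bs_inv[OF b, of "R a" "sT b x"] sT_sT[OF b] by simp
  also have "Bs (sT b (R a)) (sT b (R a)) = Bs (R a) (R a)" using Bs_inv[OF b] by simp
  also have "2 * Bs (R a) (sT b x) / Bs (R a) (R a) = pair (sT b x) (cr a)"
    using coroot_eq[OF a] by simp
  also have "\<dots> = pair x (sr b (cr a))" by (simp add: pair_sr)
  finally show "pair x (cr (sg b a)) = pair x (sr b (cr a))" .
qed

lemma conj: assumes a: "a \<in> Phi" and b: "b \<in> Phi"
  shows "sr b (sr a (sr b x)) = sr (sg b a) x"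
proof -
  have "sr b (sr a (sr b x)) = (\<lambda>i. sr b (sr b x) i - pair (R a) (sr b x) * sr b (cr a) i)"
    unfolding sr_def[of a "sr b x"] by (rule sr_diff)
  also have "\<dots> = (\<lambda>i. x i - pair (R (sg b a)) x * cr (sg b a) i)"
    by (simp add: sr_sr[OF b] cr_sg[OF a b] pair_sr R_sg)
  finally show ?thesis by (simp add: sr_def)
qed

lemma sr_neg: assumes a: "a \<in> Phi" shows "sr (\<lambda>i. - a i) = sr a"
proof
  fix x
  have "cr (\<lambda>i. - a i) = (\<lambda>i. - cr a i)" using cr_sg[OF a a] sg_self[OF a] sr_self[OF a] by simp
  then show "sr (\<lambda>i. - a i) x = sr a x" unfolding sr_def
    by (simp add: R_def pair_def sum_negf)
qed

end


context rdat begin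

abbreviation "P \<equiv> positive_roots Phi v"

lemma P_sub: "P \<subseteq> Phi" unfolding positive_roots_def by auto
lemma finP: "finite P" using fin P_sub finite_subset by auto
lemma P_pos: "a \<in> P \<Longrightarrow> pair (R a) v > 0" unfolding positive_roots_def R_def by auto
lemma P_iff: "a \<in> P \<longleftrightarrow> a \<in> Phi \<and> pair (R a) v > 0" unfolding positive_roots_def R_def by auto

lemma R_neg: "R (\<lambda>i. - a i) = (\<lambda>i. - R a i)" unfolding R_def by simp
lemma pair_neg1: "pair (\<lambda>i. - x i) y = - pair x y" unfolding pair_def by (simp add: sum_negf)

lemma nonzero: "a \<in> Phi \<Longrightarrow> pair (R a) v \<noteq> 0"
  using reg unfolding regular_def R_def by auto

lemma neg_P: assumes "a \<in> Phi" "a \<notin> P" shows "(\<lambda>i. - a i) \<in> P"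
  using assms nonzero[of a] neg_in[of a] by (auto simp: P_iff R_neg pair_neg1)

lemma neg_notP: "a \<in> P \<Longrightarrow> (\<lambda>i. - a i) \<notin> P"
  by (auto simp: P_iff R_neg pair_neg1)

definition nnc :: "('n \<Rightarrow> int) set \<Rightarrow> ('n \<Rightarrow> rat) \<Rightarrow> bool" where
  "nnc D x \<longleftrightarrow> (\<exists>c. (\<forall>d\<in>D. c d \<ge> 0) \<and> x = (\<lambda>i. \<Sum>d\<in>D. c d * R d i))"

definition gen :: "('n \<Rightarrow> int) set \<Rightarrow> bool" where
  "gen D \<longleftrightarrow> (\<forall>b\<in>P. nnc D (R b))"

lemma gen_P: "gen P"
  unfolding gen_def nnc_def
proof
  fix b assume b: "b \<in> P"
  show "\<exists>c. (\<forall>d\<in>P. 0 \<le> c d) \<and> R b = (\<lambda>i. \<Sum>d\<in>P. c d * R d i)"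
    by (rule exI[of _ "\<lambda>d. if d = b then 1 else 0"]) (simp add: b finP if_distrib[of "\<lambda>t. t * _"] cong: if_cong)
qed

lemma ex_Delta: "\<exists>D. D \<subseteq> P \<and> gen D \<and> (\<forall>a\<in>D. \<not> gen (D - {a}))"
proof -
  obtain D where D: "D \<subseteq> P \<and> gen D" and m: "\<And>E. E \<subseteq> P \<and> gen E \<Longrightarrow> card D \<le> card E"
    using ex_has_least_nat[of "\<lambda>D. D \<subseteq> P \<and> gen D" P card] gen_P by blast
  have "\<forall>a\<in>D. \<not> gen (D - {a})"
  proof (intro ballI notI)
    fix a assume a: "a \<in> D" and g: "gen (D - {a})"
    have "finite D" using D finP finite_subset by auto
    then have "card (D - {a}) < card D" using a by (rule card_Diff1_less)
    moreover have "card D \<le> card (D - {a})" using m[of "D - {a}"] D g by auto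
    ultimately show False by simp
  qed
  then show ?thesis using D by blast
qed

definition Delta where "Delta = (SOME D. D \<subseteq> P \<and> gen D \<and> (\<forall>a\<in>D. \<not> gen (D - {a})))"

lemma Delta: "Delta \<subseteq> P" "gen Delta" "\<And>a. a \<in> Delta \<Longrightarrow> \<not> gen (Delta - {a})"
  using someI_ex[OF ex_Delta] unfolding Delta_def[symmetric] by auto

lemma finD: "finite Delta" using Delta(1) finP finite_subset by auto

lemma decomp: "b \<in> P \<Longrightarrow> \<exists>c. (\<forall>d\<in>Delta. c d \<ge> 0) \<and> R b = (\<lambda>i. \<Sum>d\<in>Delta. c d * R d i)"
  using Delta(2) unfolding gen_def nnc_def by auto

lemma not_nnc: assumes a: "a \<in> Delta" shows "\<not> nnc (Delta - {a}) (R a)"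
proof
  assume "nnc (Delta - {a}) (R a)"
  then obtain e where e0: "\<forall>d\<in>Delta - {a}. e d \<ge> 0"
    and e: "R a = (\<lambda>i. \<Sum>d\<in>Delta - {a}. e d * R d i)" unfolding nnc_def by auto
  have "gen (Delta - {a})" unfolding gen_def nnc_def
  proof
    fix b assume "b \<in> P"
    then obtain c where c0: "\<forall>d\<in>Delta. c d \<ge> 0" and c: "R b = (\<lambda>i. \<Sum>d\<in>Delta. c d * R d i)"
      using decomp by auto
    have "R b = (\<lambda>i. \<Sum>d\<in>Delta - {a}. (c d + c a * e d) * R d i)"
    proof
      fix i
      have "R b i = c a * R a i + (\<Sum>d\<in>Delta - {a}. c d * R d i)"
        using c sum.remove[OF finD a, of "\<lambda>d. c d * R d i"] by simp
      also have "c a * R a i = (\<Sum>d\<in>Delta - {a}. c a * e d * R d i)"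
        by (subst e) (simp add: sum_distrib_left mult.assoc)
      finally show "R b i = (\<Sum>d\<in>Delta - {a}. (c d + c a * e d) * R d i)"
        by (simp add: sum.distrib algebra_simps)
    qed
    moreover have "\<forall>d\<in>Delta - {a}. c d + c a * e d \<ge> 0" using c0 e0 a by auto
    ultimately show "\<exists>c. (\<forall>d\<in>Delta - {a}. 0 \<le> c d) \<and> R b = (\<lambda>i. \<Sum>d\<in>Delta - {a}. c d * R d i)"
      by (intro exI[of _ "\<lambda>d. c d + c a * e d"]) auto
  qed
  then show False using Delta(3)[OF a] by simp
qed

lemma R_scale_int: "R (\<lambda>i. 2 * a i) = (\<lambda>i. 2 * R a i)" unfolding R_def by simp

lemma proportional:
  assumes a: "a \<in> Phi" and b: "b \<in> Phi" and t: "t > 0" and eq: "R b = (\<lambda>i. t * R a i)"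
  shows "b = a"
proof -
  have Bs_b: "Bs (R b) x = t * Bs (R a) x" for x
    using Bs_lin[of t "R a" 0 "R a" x] eq by simp
  have Bpos: "Bs (R a) (R a) > 0" using Bs_pos[OF a] by simp
  have n: "pair (R a) (cr b) = 2 / t"
    using coroot_eq[OF b, of "R a"] Bs_b Bs_comm[of "R a" "R b"] Bpos t
    by (simp add: field_simps)
  have m: "pair (R b) (cr a) = 2 * t"
    using eq pair_scale1[of t "R a" "cr a"] two_Q[OF a] by simp
  define m' where "m' = ipair b (cor a)"
  define n' where "n' = ipair a (cor b)"
  have m': "rat_of_int m' = 2 * t" using m pair_R m'_def by metis
  have n': "rat_of_int n' = 2 / t" using n pair_R n'_def by metis
  have "rat_of_int (m' * n') = 4" using m' n' t by simp
  then have mn: "m' * n' = 4" by linarith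
  have "rat_of_int m' > 0" using m' t by simp
  then have m0: "m' > 0" by simp
  have "0 < m' * n'" using mn by simp
  then have n0: "n' > 0" using m0 by (simp add: zero_less_mult_iff)
  have "m' * 1 \<le> m' * n'" using n0 m0 by (intro mult_left_mono) auto
  then have "m' \<le> 4" using mn by simp
  then have "m' = 1 \<or> m' = 2 \<or> m' = 3 \<or> m' = 4" using m0 by auto
  moreover have "m' \<noteq> 3" proof assume "m' = 3" then have "3 * n' = 4" using mn by simp then show False by presburger qed
  moreover have "m' \<noteq> 1"
  proof
    assume "m' = 1"
    then have "t = 1/2" using m' by simp
    then have "R a = R (\<lambda>i. 2 * b i)" using eq R_scale_int[of b] by (auto simp: fun_eq_iff)
    then have "a = (\<lambda>i. 2 * b i)" by (rule R_inj)
    then show False using reduced[OF b] a by simp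
  qed
  moreover have "m' \<noteq> 4"
  proof
    assume "m' = 4"
    then have "t = 2" using m' by simp
    then have "R b = R (\<lambda>i. 2 * a i)" using eq R_scale_int[of a] by (auto simp: fun_eq_iff)
    then have "b = (\<lambda>i. 2 * a i)" by (rule R_inj)
    then show False using reduced[OF a] b by simp
  qed
  ultimately have "m' = 2" by auto
  then have "t = 1" using m' by simp
  then show "b = a" using eq by (intro R_inj) (simp add: fun_eq_iff)
qed

end


context rdat begin

lemma R_sg': "R (sg a b) = (\<lambda>i. R b i - pair (R b) (cr a) * R a i)"
  using R_sg sT_def by simp

lemma perm: assumes a: "a \<in> Delta" and b: "b \<in> P" and ne: "b \<noteq> a"
  shows "sg a b \<in> P"
proof (rule ccontr)
  assume nP: "sg a b \<notin> P"
  have aP: "a \<in> P" using a Delta(1) by auto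
  have aPhi: "a \<in> Phi" and bPhi: "b \<in> Phi" using aP b P_sub by auto
  define k where "k = pair (R b) (cr a)"
  define g where "g = (\<lambda>i. - sg a b i)"
  have gP: "g \<in> P" unfolding g_def using neg_P[OF sg_in[OF aPhi bPhi] nP] .
  have Rg: "R g = (\<lambda>i. k * R a i - R b i)"
    unfolding g_def R_neg R_sg' k_def by (simp add: fun_eq_iff)
  obtain c where c0: "\<forall>d\<in>Delta. c d \<ge> 0" and c: "R b = (\<lambda>i. \<Sum>d\<in>Delta. c d * R d i)"
    using decomp[OF b] by auto
  obtain d where d0: "\<forall>x\<in>Delta. d x \<ge> 0" and d: "R g = (\<lambda>i. \<Sum>x\<in>Delta. d x * R x i)"
    using decomp[OF gP] by auto
  define e where "e = (\<lambda>x. c x + d x)"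
  have e0: "\<forall>x\<in>Delta. e x \<ge> 0" using c0 d0 e_def by auto
  have ke: "(\<lambda>i. k * R a i) = (\<lambda>i. \<Sum>x\<in>Delta. e x * R x i)"
  proof
    fix i
    have "k * R a i = R b i + R g i" using Rg by simp
    also have "\<dots> = (\<Sum>x\<in>Delta. e x * R x i)" using c d unfolding e_def
      by (simp add: sum.distrib algebra_simps)
    finally show "k * R a i = (\<Sum>x\<in>Delta. e x * R x i)" .
  qed
  have rest: "(\<lambda>i. \<Sum>x\<in>Delta - {a}. e x * R x i) = (\<lambda>i. (k - e a) * R a i)"
  proof
    fix i
    have "k * R a i = e a * R a i + (\<Sum>x\<in>Delta - {a}. e x * R x i)"
      using fun_cong[OF ke, of i] sum.remove[OF finD a, of "\<lambda>x. e x * R x i"] by simp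
    then show "(\<Sum>x\<in>Delta - {a}. e x * R x i) = (k - e a) * R a i" by (simp add: algebra_simps)
  qed
  show False
  proof (cases "k - e a > 0")
    case True
    have "nnc (Delta - {a}) (R a)" unfolding nnc_def
    proof (intro exI[of _ "\<lambda>x. e x / (k - e a)"] conjI)
      show "\<forall>x\<in>Delta - {a}. 0 \<le> e x / (k - e a)" using e0 True by auto
      show "R a = (\<lambda>i. \<Sum>x\<in>Delta - {a}. e x / (k - e a) * R x i)"
      proof
        fix i
        have "(\<Sum>x\<in>Delta - {a}. e x / (k - e a) * R x i) = (\<Sum>x\<in>Delta - {a}. e x * R x i) / (k - e a)"
          by (simp add: sum_divide_distrib)
        also have "\<dots> = R a i" using fun_cong[OF rest, of i] True by simp
        finally show "R a i = (\<Sum>x\<in>Delta - {a}. e x / (k - e a) * R x i)" by simp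
      qed
    qed
    then show False using not_nnc[OF a] by simp
  next
    case False
    have "pair (\<lambda>i. \<Sum>x\<in>Delta - {a}. e x * R x i) v = (k - e a) * pair (R a) v"
      using rest pair_scale1 by metis
    also have "\<dots> \<le> 0" using False P_pos[OF aP] by (simp add: mult_nonpos_nonneg)
    finally have s0: "(\<Sum>x\<in>Delta - {a}. e x * pair (R x) v) \<le> 0"
      by (simp add: pair_sum1 pair_scale1)
    have nn: "\<forall>x\<in>Delta - {a}. e x * pair (R x) v \<ge> 0"
    proof
      fix x assume x: "x \<in> Delta - {a}"
      then have "e x \<ge> 0" "pair (R x) v > 0" using e0 Delta(1) P_pos by auto
      then show "e x * pair (R x) v \<ge> 0" by simp
    qed
    then have "(\<Sum>x\<in>Delta - {a}. e x * pair (R x) v) \<ge> 0" by (intro sum_nonneg) auto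
    then have "(\<Sum>x\<in>Delta - {a}. e x * pair (R x) v) = 0"
      using s0 by linarith
    then have z: "\<forall>x\<in>Delta - {a}. e x * pair (R x) v = 0"
      using sum_nonneg_eq_0_iff[of "Delta - {a}" "\<lambda>x. e x * pair (R x) v"] finD nn by auto
    have cz: "\<forall>x\<in>Delta - {a}. c x = 0"
    proof
      fix x assume x: "x \<in> Delta - {a}"
      then have "pair (R x) v > 0" using Delta(1) P_pos by auto
      then have "e x = 0" using z x by auto
      then show "c x = 0" using c0 d0 x unfolding e_def by (metis DiffD1 add_nonneg_eq_0_iff)
    qed
    have Rb: "R b = (\<lambda>i. c a * R a i)"
    proof
      fix i
      have "R b i = c a * R a i + (\<Sum>x\<in>Delta - {a}. c x * R x i)"
        using c sum.remove[OF finD a, of "\<lambda>x. c x * R x i"] by simp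
      then show "R b i = c a * R a i" using cz by simp
    qed
    have "pair (R b) v = c a * pair (R a) v" using Rb pair_scale1 by metis
    then have "c a > 0" using P_pos[OF b] P_pos[OF aP] by (metis zero_less_mult_pos2)
    then show False using proportional[OF aPhi bPhi _ Rb] ne by simp
  qed
qed

lemma sg_ne: assumes a: "a \<in> Delta" and b: "b \<in> P" and ne: "b \<noteq> a" shows "sg a b \<noteq> a"
proof
  assume "sg a b = a"
  have aPhi: "a \<in> Phi" using a Delta(1) P_sub by auto
  then have "b = sg a a" using sg_sg[OF aPhi, of b] \<open>sg a b = a\<close> by simp
  then have "b = (\<lambda>i. - a i)" using sg_self[OF aPhi] by simp
  then show False using neg_notP[of a] a Delta(1) b by auto
qed

definition A :: "('n \<Rightarrow> rat) \<Rightarrow> ('n \<Rightarrow> int) set" where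
  "A z = {b\<in>P. pair (R b) z < 0}"

lemma finA: "finite (A z)" unfolding A_def using finP by auto

lemma pair_R_sr: "pair (R b) (sr a z) = pair (R (sg a b)) z"
  by (simp add: pair_sr R_sg)

lemma A_sr_image: assumes a: "a \<in> Delta"
  shows "A (sr a z) - {a} = sg a ` (A z - {a})"
proof -
  have aPhi: "a \<in> Phi" using a Delta(1) P_sub by auto
  show ?thesis
  proof
    show "sg a ` (A z - {a}) \<subseteq> A (sr a z) - {a}"
    proof
      fix x assume "x \<in> sg a ` (A z - {a})"
      then obtain b where b: "b \<in> A z" "b \<noteq> a" and x: "x = sg a b" by auto
      have bP: "b \<in> P" using b unfolding A_def by auto
      then have "b \<in> Phi" using P_sub by auto
      then show "x \<in> A (sr a z) - {a}" using b perm[OF a bP b(2)] sg_ne[OF a bP b(2)] x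
        unfolding A_def by (simp add: pair_R_sr sg_sg[OF aPhi])
    qed
  next
    show "A (sr a z) - {a} \<subseteq> sg a ` (A z - {a})"
    proof
      fix x assume x: "x \<in> A (sr a z) - {a}"
      have xP: "x \<in> P" and xa: "x \<noteq> a" using x unfolding A_def by auto
      have "sg a x \<in> A z - {a}" using perm[OF a xP xa] sg_ne[OF a xP xa] x
        unfolding A_def by (simp add: pair_R_sr)
      moreover have "x = sg a (sg a x)" using sg_sg[OF aPhi] by simp
      ultimately show "x \<in> sg a ` (A z - {a})" by blast
    qed
  qed
qed

lemma card_A_sr: assumes a: "a \<in> Delta"
  shows "card (A (sr a z) - {a}) = card (A z - {a})"
proof -
  have aPhi: "a \<in> Phi" using a Delta(1) P_sub by auto
  have "inj_on (sg a) (A z - {a})" by (rule inj_on_inverseI[of _ "sg a"]) (simp add: sg_sg[OF aPhi])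
  then show ?thesis using A_sr_image[OF a] by (simp add: card_image)
qed

lemma a_in_A_sr: assumes a: "a \<in> Delta" shows "a \<in> A (sr a z) \<longleftrightarrow> pair (R a) z > 0"
proof -
  have aPhi: "a \<in> Phi" and aP: "a \<in> P" using a Delta(1) P_sub by auto
  show ?thesis unfolding A_def using aP
    by (simp add: pair_R_sr sg_self[OF aPhi] R_neg pair_neg1)
qed

lemma card_down: assumes a: "a \<in> Delta" and neg: "pair (R a) z < 0"
  shows "card (A (sr a z)) + 1 = card (A z)"
proof -
  have aP: "a \<in> P" using a Delta(1) by auto
  have "a \<in> A z" using aP neg unfolding A_def by auto
  then have "card (A z) = card (A z - {a}) + 1" using finA
    by (metis card_Suc_Diff1 Suc_eq_plus1)
  moreover have "a \<notin> A (sr a z)" using a_in_A_sr[OF a] neg by auto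
  then have "A (sr a z) - {a} = A (sr a z)" by simp
  ultimately show ?thesis using card_A_sr[OF a, of z] by simp
qed

lemma card_up: assumes a: "a \<in> Delta" and pos: "pair (R a) z > 0"
  shows "card (A (sr a z)) = card (A z) + 1"
proof -
  have aP: "a \<in> P" using a Delta(1) by auto
  have "a \<notin> A z" using pos unfolding A_def by auto
  then have "card (A z) = card (A z - {a})" by simp
  moreover have "a \<in> A (sr a z)" using a_in_A_sr[OF a] pos by auto
  then have "card (A (sr a z)) = card (A (sr a z) - {a}) + 1" using finA
    by (metis card_Suc_Diff1 Suc_eq_plus1)
  ultimately show ?thesis using card_A_sr[OF a] by simp
qed

end


context rdat begin

abbreviation "W \<equiv> weyl_group Phi cor"

lemma sr_W: "a \<in> Phi \<Longrightarrow> sr a \<in> W"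
  using weyl_group.refl[OF weyl_group.id] by simp

lemma W_comp: "w1 \<in> W \<Longrightarrow> w2 \<in> W \<Longrightarrow> w1 \<circ> w2 \<in> W"
proof (induction w1 rule: weyl_group.induct)
  case id then show ?case by simp
next
  case (refl w a)
  have "w \<circ> w2 \<in> W" using refl.IH[OF refl.prems] .
  from weyl_group.refl[OF this refl(2)] show ?case by (metis comp_assoc)
qed

lemma W_inv: "w \<in> W \<Longrightarrow> \<exists>w'\<in>W. w' \<circ> w = id \<and> w \<circ> w' = id"
proof (induction w rule: weyl_group.induct)
  case id then show ?case by (intro bexI[of _ id]) (auto intro: weyl_group.id)
next
  case (refl w a)
  then obtain w' where w': "w' \<in> W" "w' \<circ> w = id" "w \<circ> w' = id" by blast
  have ss: "sr a \<circ> sr a = id" using sr_sr[OF refl(2)] by (auto simp: fun_eq_iff)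
  have "w' \<circ> sr a \<in> W" using W_comp[OF w'(1) sr_W[OF refl(2)]] .
  moreover have "(w' \<circ> sr a) \<circ> (sr a \<circ> w) = id" using w'(2) ss by (metis comp_assoc comp_id)
  moreover have "(sr a \<circ> w) \<circ> (w' \<circ> sr a) = id" using w'(3) ss by (metis comp_assoc comp_id)
  ultimately show ?case by blast
qed

lemma W_roots: "w \<in> W \<Longrightarrow> b \<in> Phi \<Longrightarrow> \<exists>b'\<in>Phi. \<forall>x. pair (R b) (w x) = pair (R b') x"
proof (induction w arbitrary: b rule: weyl_group.induct)
  case id then show ?case by auto
next
  case (refl w a)
  have "sg a b \<in> Phi" using sg_in refl by auto
  then obtain b' where "b' \<in> Phi" "\<forall>x. pair (R (sg a b)) (w x) = pair (R b') x" using refl by auto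
  then show ?case by (auto simp: pair_R_sr)
qed

lemma W_transp: "w \<in> W \<Longrightarrow> \<exists>u'. \<forall>x. pair u (w x) = pair u' x"
proof (induction w arbitrary: u rule: weyl_group.induct)
  case id then show ?case by auto
next
  case (refl w a)
  obtain u' where "\<forall>x. pair (sT a u) (w x) = pair u' x" using refl by blast
  then show ?case by (auto simp: pair_sr)
qed

lemma W_lin: "w \<in> W \<Longrightarrow> w (\<lambda>i. c * x i + d * y i) = (\<lambda>i. c * w x i + d * w y i)"
proof (induction w rule: weyl_group.induct)
  case id then show ?case by simp
next
  case (refl w a) then show ?case by (simp add: sr_lin)
qed

lemma W_regular: "w \<in> W \<Longrightarrow> b \<in> Phi \<Longrightarrow> pair (R b) (w v) \<noteq> 0"
  using W_roots nonzero by metis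

fun spw :: "('n \<Rightarrow> int) list \<Rightarrow> ('n \<Rightarrow> rat) \<Rightarrow> ('n \<Rightarrow> rat)" where
  "spw [] = id"
| "spw (a # as) = sr a \<circ> spw as"

fun Tr :: "('n \<Rightarrow> int) list \<Rightarrow> ('n \<Rightarrow> int) \<Rightarrow> ('n \<Rightarrow> int)" where
  "Tr [] b = b"
| "Tr (a # as) b = Tr as (sg a b)"

lemma spw_W: "set as \<subseteq> Phi \<Longrightarrow> spw as \<in> W"
  by (induction as) (auto intro: weyl_group.intros)

lemma spw_append: "spw (as @ bs) = spw as \<circ> spw bs"
  by (induction as) auto

lemma Tr_pair: "pair (R b) (spw as x) = pair (R (Tr as b)) x"
  by (induction as arbitrary: b) (auto simp: pair_R_sr)

lemma Tr_in: "set as \<subseteq> Phi \<Longrightarrow> b \<in> Phi \<Longrightarrow> Tr as b \<in> Phi"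
  by (induction as arbitrary: b) (auto simp: sg_in)

lemma Delta_Phi: "Delta \<subseteq> Phi" using Delta(1) P_sub by auto

lemma sr_swap: assumes a: "a \<in> Phi" and b: "b \<in> Phi"
  shows "sr b \<circ> sr a = sr a \<circ> sr (sg a b)"
proof
  fix y
  have "sr a (sr (sg a b) y) = sr a (sr a (sr b (sr a y)))" using conj[OF b a] by simp
  then show "(sr b \<circ> sr a) y = (sr a \<circ> sr (sg a b)) y" using sr_sr[OF a] by simp
qed

lemma exchange:
  "set as \<subseteq> Delta \<Longrightarrow> b \<in> P \<Longrightarrow> Tr as b \<notin> P \<Longrightarrow>
    \<exists>i<length as. sr b \<circ> spw as = spw (take i as @ drop (Suc i) as)"
proof (induction as arbitrary: b)
  case Nil then show ?case by simp
next
  case (Cons a as)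
  have aD: "a \<in> Delta" using Cons by auto
  have aPhi: "a \<in> Phi" using aD Delta_Phi by auto
  show ?case
  proof (cases "b = a")
    case True
    have "sr b \<circ> spw (a # as) = spw as"
    proof
      fix x show "(sr b \<circ> spw (a # as)) x = spw as x" using True sr_sr[OF aPhi] by simp
    qed
    then show ?thesis by (metis append.simps(1) drop_Suc_Cons drop_0 take_0 length_Cons zero_less_Suc)
  next
    case False
    have bP: "sg a b \<in> P" using perm[OF aD Cons(3) False] .
    have tn: "Tr as (sg a b) \<notin> P" using Cons(4) by simp
    have asD: "set as \<subseteq> Delta" using Cons(2) by simp
    obtain i where i: "i < length as" "sr (sg a b) \<circ> spw as = spw (take i as @ drop (Suc i) as)"
      using Cons(1)[OF asD bP tn] by blast
    have bPhi: "b \<in> Phi" using Cons(3) P_sub by auto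
    have "sr b \<circ> spw (a # as) = sr a \<circ> (sr (sg a b) \<circ> spw as)"
      using sr_swap[OF aPhi bPhi] by (metis comp_assoc spw.simps(2))
    also have "\<dots> = spw (take (Suc i) (a # as) @ drop (Suc (Suc i)) (a # as))"
      using i(2) by (metis spw.simps(2) take_Suc_Cons drop_Suc_Cons append_Cons)
    finally have X: "sr b \<circ> spw (a # as) = spw (take (Suc i) (a # as) @ drop (Suc (Suc i)) (a # as))" .
    have "Suc i < length (a # as)" using i(1) by simp
    then show ?thesis using X by blast
  qed
qed

lemma Bs_sum2: "Bs x (\<lambda>i. \<Sum>d\<in>D. c d * y d i) = (\<Sum>d\<in>D. c d * Bs x (y d))"
proof -
  have "Bs x (\<lambda>i. \<Sum>d\<in>D. c d * y d i) = (\<Sum>b\<in>Phi. pair x (cr b) * (\<Sum>d\<in>D. c d * pair (y d) (cr b)))"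
    unfolding Bs_def pair_sum1 pair_scale1 ..
  also have "\<dots> = (\<Sum>d\<in>D. c d * Bs x (y d))"
    unfolding Bs_def sum_distrib_left by (subst sum.swap) (simp add: algebra_simps)
  finally show ?thesis .
qed

lemma generation: "b \<in> P \<Longrightarrow> \<exists>bs. set bs \<subseteq> Delta \<and> sr b = spw bs"
proof (induction "card {d\<in>P. pair (R d) v < pair (R b) v}" arbitrary: b rule: less_induct)
  case less
  show ?case
  proof (cases "b \<in> Delta")
    case True then show ?thesis by (intro exI[of _ "[b]"]) auto
  next
    case False
    have bPhi: "b \<in> Phi" using less P_sub by auto
    obtain c where c0: "\<forall>d\<in>Delta. c d \<ge> 0" and c: "R b = (\<lambda>i. \<Sum>d\<in>Delta. c d * R d i)"
      using decomp[OF less(2)] by auto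
    have "0 < Bs (R b) (R b)" using Bs_pos[OF bPhi] by simp
    also have "Bs (R b) (R b) = (\<Sum>d\<in>Delta. c d * Bs (R b) (R d))"
      by (subst (2) c) (rule Bs_sum2)
    finally obtain g where g: "g \<in> Delta" "0 < c g * Bs (R b) (R g)"
      by (metis (no_types, lifting) linorder_not_le sum_nonpos)
    have gPhi: "g \<in> Phi" using g Delta_Phi by auto
    have "Bs (R b) (R g) > 0" using g c0 by (metis linorder_not_le mult_nonneg_nonpos)
    then have k: "pair (R b) (cr g) > 0"
      using coroot_eq[OF gPhi, of "R b"] Bs_pos[OF gPhi] Bs_comm by simp
    have ne: "b \<noteq> g" using False g by auto
    define b' where "b' = sg g b"
    have b'P: "b' \<in> P" using perm[OF g(1) less(2) ne] b'_def by simp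
    have gP: "g \<in> P" using g Delta(1) by auto
    have "pair (R b') v = pair (R b) v - pair (R b) (cr g) * pair (R g) v"
      unfolding b'_def R_sg' pair_diff1 pair_scale1 ..
    then have lt: "pair (R b') v < pair (R b) v" using k P_pos[OF gP] by simp
    have "{d\<in>P. pair (R d) v < pair (R b') v} \<subset> {d\<in>P. pair (R d) v < pair (R b) v}"
      using lt b'P by auto
    then have "card {d\<in>P. pair (R d) v < pair (R b') v} < card {d\<in>P. pair (R d) v < pair (R b) v}"
      by (rule psubset_card_mono[rotated]) (simp add: finP)
    then obtain bs where bs: "set bs \<subseteq> Delta" "sr b' = spw bs" using less(1) b'P by blast
    have "sr b = sr g \<circ> sr b' \<circ> sr g"
    proof
      fix x
      have "sr g (sr b' (sr g x)) = sr g (sr g (sr b (sr g (sr g x))))" unfolding b'_def conj[OF bPhi gPhi] ..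
      then show "sr b x = (sr g \<circ> sr b' \<circ> sr g) x" using sr_sr[OF gPhi] by simp
    qed
    also have "\<dots> = spw ([g] @ bs @ [g])" using bs by (simp add: spw_append comp_assoc)
    finally show ?thesis using bs g by (intro exI[of _ "[g] @ bs @ [g]"]) auto
  qed
qed

lemma generation_Phi: "b \<in> Phi \<Longrightarrow> \<exists>bs. set bs \<subseteq> Delta \<and> sr b = spw bs"
proof (cases "b \<in> P")
  case True then show ?thesis using generation by auto
next
  case False
  assume b: "b \<in> Phi"
  have nb: "(\<lambda>i. - b i) \<in> P" using neg_P[OF b False] .
  have "sr b = sr (\<lambda>i. - b i)" using sr_neg[OF b] by simp
  then show ?thesis using generation[OF nb] by auto
qed

end

context rdat begin
lemma left_mult:
  assumes a: "a \<in> Delta" and as: "set as \<subseteq> Delta" and len: "length as = card (A (spw as v))"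
  shows "\<exists>bs. set bs \<subseteq> Delta \<and> length bs = card (A (sr a (spw as v))) \<and> sr a \<circ> spw as = spw bs"
proof -
  have aPhi: "a \<in> Phi" using a Delta_Phi by auto
  have asPhi: "set as \<subseteq> Phi" using as Delta_Phi by auto
  have "pair (R a) (spw as v) \<noteq> 0" using W_regular[OF spw_W[OF asPhi] aPhi] .
  then consider "pair (R a) (spw as v) > 0" | "pair (R a) (spw as v) < 0" by linarith
  then show ?thesis
  proof cases
    case 1
    have "length (a # as) = card (A (sr a (spw as v)))" using card_up[OF a 1] len by simp
    moreover have "set (a # as) \<subseteq> Delta" using as a by simp
    moreover have "sr a \<circ> spw as = spw (a # as)" by simp
    ultimately show ?thesis by blast
  next
    case 2
    have aP: "a \<in> P" using a Delta(1) by auto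
    have "pair (R (Tr as a)) v < 0" using 2 Tr_pair[of a as v] by simp
    then have "Tr as a \<notin> P" using P_pos by force
    then obtain i where i: "i < length as" "sr a \<circ> spw as = spw (take i as @ drop (Suc i) as)"
      using exchange[OF as aP] by blast
    have "set (take i as @ drop (Suc i) as) \<subseteq> set as"
      using set_take_subset[of i as] set_drop_subset[of "Suc i" as] by auto
    then have "set (take i as @ drop (Suc i) as) \<subseteq> Delta" using as by blast
    moreover have "length (take i as @ drop (Suc i) as) = card (A (sr a (spw as v)))"
      using card_down[OF a 2] len i(1) by simp
    ultimately show ?thesis using i by blast
  qed
qed

lemma left_mult_list:
  assumes bs: "set bs \<subseteq> Delta" and as: "set as \<subseteq> Delta" and len: "length as = card (A (spw as v))"
  shows "\<exists>cs. set cs \<subseteq> Delta \<and> length cs = card (A (spw bs (spw as v))) \<and> spw bs \<circ> spw as = spw cs"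
  using bs
proof (induction bs)
  case Nil
  have "set as \<subseteq> Delta \<and> length as = card (A (spw [] (spw as v))) \<and> spw [] \<circ> spw as = spw as"
    using as len by simp
  then show ?case by (rule exI[of _ as])
next
  case (Cons b bs)
  have "set bs \<subseteq> Delta" using Cons.prems by simp
  then obtain cs where cs: "set cs \<subseteq> Delta" "length cs = card (A (spw bs (spw as v)))"
    "spw bs \<circ> spw as = spw cs" using Cons.IH by blast
  have "spw cs v = spw bs (spw as v)" using fun_cong[OF cs(3), of v] by simp
  note sv = this
  have bD: "b \<in> Delta" using Cons.prems by simp
  have lc: "length cs = card (A (spw cs v))" using cs(2) sv by simp
  obtain ds where ds: "set ds \<subseteq> Delta" "length ds = card (A (sr b (spw cs v)))"
    "sr b \<circ> spw cs = spw ds"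
    using left_mult[OF bD cs(1) lc] by blast
  have l: "length ds = card (A (spw (b # bs) (spw as v)))" using ds(2) sv by simp
  have "spw (b # bs) \<circ> spw as = sr b \<circ> spw cs" using cs(3) by (simp only: spw.simps comp_assoc)
  then have e: "spw (b # bs) \<circ> spw as = spw ds" using ds(3) by simp
  show ?case by (rule exI[of _ ds]) (intro conjI ds(1) l e)
qed

lemma A_v: "A v = {}" unfolding A_def by (auto dest: P_pos)

lemma W_reduced: "w \<in> W \<Longrightarrow> \<exists>as. set as \<subseteq> Delta \<and> length as = card (A (w v)) \<and> w = spw as"
proof (induction w rule: weyl_group.induct)
  case id
  have "set [] \<subseteq> Delta \<and> length [] = card (A (id v)) \<and> id = spw []" using A_v by simp
  then show ?case by blast
next
  case (refl w a)
  then obtain as where as: "set as \<subseteq> Delta" "length as = card (A (w v))" "w = spw as" by blast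
  obtain bs where bs: "set bs \<subseteq> Delta" "sr a = spw bs" using generation_Phi[OF refl(2)] by blast
  obtain cs where cs: "set cs \<subseteq> Delta" "length cs = card (A (spw bs (spw as v)))" "spw bs \<circ> spw as = spw cs"
    using left_mult_list[OF bs(1) as(1)] as by blast
  have e: "sr a \<circ> w = spw cs" by (simp only: bs(2) as(3) cs(3))
  have "(sr a \<circ> w) v = spw bs (spw as v)" by (simp only: as(3) bs(2) comp_apply)
  then have "length cs = card (A ((sr a \<circ> w) v))" using cs(2) by simp
  then show ?case using cs(1) e by blast
qed

lemma W_finite: "finite W"
proof -
  have "W \<subseteq> spw ` {as. set as \<subseteq> Delta \<and> length as \<le> card P}"
  proof
    fix w assume w: "w \<in> W"
    then obtain as where as: "set as \<subseteq> Delta" "length as = card (A (w v))" "w = spw as"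
      using W_reduced by blast
    have "card (A (w v)) \<le> card P" unfolding A_def by (rule card_mono[OF finP]) auto
    then show "w \<in> spw ` {as. set as \<subseteq> Delta \<and> length as \<le> card P}" using as by auto
  qed
  moreover have "finite {as. set as \<subseteq> Delta \<and> length as \<le> card P}"
    by (rule finite_lists_length_le[OF finD])
  ultimately show ?thesis using finite_subset by blast
qed

lemma card_A_le: "set as \<subseteq> Delta \<Longrightarrow> card (A (spw as v)) \<le> length as"
proof (induction as)
  case Nil then show ?case using A_v by simp
next
  case (Cons a as)
  have aD: "a \<in> Delta" using Cons by auto
  have asPhi: "set as \<subseteq> Phi" using Cons Delta_Phi by auto
  have "pair (R a) (spw as v) \<noteq> 0" using W_regular[OF spw_W[OF asPhi]] aD Delta_Phi by auto
  then consider "pair (R a) (spw as v) > 0" | "pair (R a) (spw as v) < 0" by linarith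
  then show ?case
  proof cases
    case 1
    have "card (A (sr a (spw as v))) = card (A (spw as v)) + 1" using card_up[OF aD 1] .
    then show ?thesis using Cons by simp
  next
    case 2
    have "card (A (sr a (spw as v))) + 1 = card (A (spw as v))" using card_down[OF aD 2] .
    then show ?thesis using Cons by simp
  qed
qed

end


context rdat begin

abbreviation "Ch \<equiv> pos_chamber Phi v"

lemma Ch_iff: "x \<in> Ch \<longleftrightarrow> (\<forall>a\<in>P. pair (R a) x \<ge> 0)"
  unfolding pos_chamber_def R_def by simp

lemma Ch_A: "x \<in> Ch \<longleftrightarrow> A x = {}"
  unfolding Ch_iff A_def by (auto simp: not_less)

lemma sum_upd:
  assumes "finite S" "a \<in> S"
  shows "(\<Sum>b\<in>S. (c(a := c a + t)) b * g b) = (\<Sum>b\<in>S. c b * g b) + t * (g a :: rat)"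
proof -
  have h1: "(\<Sum>b\<in>S. (c(a := c a + t)) b * g b) = (c(a := c a + t)) a * g a + (\<Sum>b\<in>S - {a}. (c(a := c a + t)) b * g b)"
    by (rule sum.remove[OF assms])
  have h2: "(\<Sum>b\<in>S - {a}. (c(a := c a + t)) b * g b) = (\<Sum>b\<in>S - {a}. c b * g b)"
    by (rule sum.cong) auto
  have h3: "(\<Sum>b\<in>S. c b * g b) = c a * g a + (\<Sum>b\<in>S - {a}. c b * g b)"
    by (rule sum.remove[OF assms])
  have h4: "(c(a := c a + t)) a * g a = c a * g a + t * g a" by (simp add: algebra_simps)
  show ?thesis unfolding h1 h2 h3 h4 by simp
qed

lemma key_list:
  "set as \<subseteq> Delta \<Longrightarrow> length as = card (A (spw as v)) \<Longrightarrow> x \<in> Ch \<Longrightarrow>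
   \<exists>c. (\<forall>b\<in>P. c b \<ge> 0) \<and> (\<lambda>i. x i - spw as x i) = (\<lambda>i. \<Sum>b\<in>P. c b * cr b i)"
proof (induction as)
  case Nil
  have "(\<lambda>i. x i - spw [] x i) = (\<lambda>i. \<Sum>b\<in>P. 0 * cr b i)" by simp
  then show ?case by (intro exI[of _ "\<lambda>b. 0"]) simp
next
  case (Cons a as)
  have aD: "a \<in> Delta" and asD: "set as \<subseteq> Delta" using Cons.prems by auto
  have aP: "a \<in> P" using aD Delta(1) by auto
  have aPhi: "a \<in> Phi" and asPhi: "set as \<subseteq> Phi" using aD asD Delta_Phi by auto
  let ?z = "spw as v"
  have len: "card (A (sr a ?z)) = Suc (length as)" using Cons.prems(2) by simp
  have le: "card (A ?z) \<le> length as" using card_A_le[OF asD] .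
  have "pair (R a) ?z \<noteq> 0" using W_regular[OF spw_W[OF asPhi] aPhi] .
  moreover have "\<not> pair (R a) ?z < 0"
  proof
    assume "pair (R a) ?z < 0"
    then have "card (A (sr a ?z)) + 1 = card (A ?z)" using card_down[OF aD] by blast
    then show False using len le by simp
  qed
  ultimately have pos: "pair (R a) ?z > 0" by linarith
  then have "card (A (sr a ?z)) = card (A ?z) + 1" using card_up[OF aD] by blast
  then have lenz: "length as = card (A ?z)" using len by simp
  from Cons.IH[OF asD lenz Cons.prems(3)] obtain c where c0: "\<forall>b\<in>P. c b \<ge> 0"
    and c: "(\<lambda>i. x i - spw as x i) = (\<lambda>i. \<Sum>b\<in>P. c b * cr b i)" by blast
  define t where "t = pair (R a) (spw as x)"
  have tT: "t = pair (R (Tr as a)) x" unfolding t_def Tr_pair ..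
  have "pair (R (Tr as a)) v > 0" using pos Tr_pair[of a as v] by simp
  moreover have "Tr as a \<in> Phi" using Tr_in[OF asPhi aPhi] .
  ultimately have "Tr as a \<in> P" using P_iff by blast
  then have t0: "t \<ge> 0" using tT Cons.prems(3) Ch_iff by auto
  have eqc: "(\<lambda>i. x i - spw (a # as) x i) = (\<lambda>i. \<Sum>b\<in>P. (c(a := c a + t)) b * cr b i)"
  proof
    fix i
    have "spw (a # as) x i = spw as x i - t * cr a i" unfolding t_def by (simp add: sr_def)
    then have "x i - spw (a # as) x i = (x i - spw as x i) + t * cr a i" by simp
    also have "\<dots> = (\<Sum>b\<in>P. c b * cr b i) + t * cr a i" using fun_cong[OF c, of i] by simp
    also have "\<dots> = (\<Sum>b\<in>P. (c(a := c a + t)) b * cr b i)"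
      using sum_upd[OF finP aP, of c t "\<lambda>b. cr b i"] by simp
    finally show "x i - spw (a # as) x i = (\<Sum>b\<in>P. (c(a := c a + t)) b * cr b i)" .
  qed
  have nnc': "\<forall>b\<in>P. (c(a := c a + t)) b \<ge> 0" using c0 t0 by auto
  show ?case by (intro exI[of _ "c(a := c a + t)"] conjI nnc' eqc)
qed

end

context rdat begin
lemma key: assumes w: "w \<in> W" and x: "x \<in> Ch"
  shows "\<exists>c. (\<forall>b\<in>P. c b \<ge> 0) \<and> (\<lambda>i. x i - w x i) = (\<lambda>i. \<Sum>b\<in>P. c b * cr b i)"
proof -
  obtain as where as: "set as \<subseteq> Delta" "length as = card (A (w v))" "w = spw as" using W_reduced[OF w] by blast
  have l: "length as = card (A (spw as v))" using as(2) as(3) by simp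
  have "\<exists>c. (\<forall>b\<in>P. c b \<ge> 0) \<and> (\<lambda>i. x i - spw as x i) = (\<lambda>i. \<Sum>b\<in>P. c b * cr b i)"
    using key_list[OF as(1) l x] .
  then show ?thesis using as(3) by simp
qed

lemma dom_ineq: assumes w: "w \<in> W" and x: "x \<in> Ch" and u: "\<forall>b\<in>P. pair u (cr b) \<ge> 0"
  shows "pair u (w x) \<le> pair u x"
proof -
  obtain c where c0: "\<forall>b\<in>P. c b \<ge> 0" and c: "(\<lambda>i. x i - w x i) = (\<lambda>i. \<Sum>b\<in>P. c b * cr b i)"
    using key[OF w x] by blast
  have "pair u x - pair u (w x) = pair u (\<lambda>i. x i - w x i)" by (rule pair_diff2[symmetric])
  also have "\<dots> = pair u (\<lambda>i. \<Sum>b\<in>P. c b * cr b i)" using c by simp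
  also have "\<dots> = (\<Sum>b\<in>P. c b * pair u (cr b))" by (simp add: pair_sum2 pair_scale2)
  also have "\<dots> \<ge> 0" using c0 u by (intro sum_nonneg) simp
  finally show ?thesis by simp
qed

lemma dom_strict: assumes w: "w \<in> W" and x: "x \<in> Ch" and u: "\<forall>b\<in>P. pair u (cr b) > 0"
  and ne: "w x \<noteq> x"
  shows "pair u (w x) < pair u x"
proof -
  obtain c where c0: "\<forall>b\<in>P. c b \<ge> 0" and c: "(\<lambda>i. x i - w x i) = (\<lambda>i. \<Sum>b\<in>P. c b * cr b i)"
    using key[OF w x] by blast
  have "pair u x - pair u (w x) = pair u (\<lambda>i. x i - w x i)" by (rule pair_diff2[symmetric])
  also have "\<dots> = pair u (\<lambda>i. \<Sum>b\<in>P. c b * cr b i)" using c by simp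
  also have "\<dots> = (\<Sum>b\<in>P. c b * pair u (cr b))" by (simp add: pair_sum2 pair_scale2)
  finally have eq: "pair u x - pair u (w x) = (\<Sum>b\<in>P. c b * pair u (cr b))" .
  have nn: "\<And>b. b \<in> P \<Longrightarrow> c b * pair u (cr b) \<ge> 0"
  proof -
    fix b assume "b \<in> P"
    then have "c b \<ge> 0" "pair u (cr b) > 0" using c0 u by auto
    then show "c b * pair u (cr b) \<ge> 0" by simp
  qed
  show ?thesis
  proof (rule ccontr)
    assume "\<not> ?thesis"
    then have le: "(\<Sum>b\<in>P. c b * pair u (cr b)) \<le> 0" using eq by simp
    have ge: "(\<Sum>b\<in>P. c b * pair u (cr b)) \<ge> 0" using nn by (intro sum_nonneg) auto
    have z: "(\<Sum>b\<in>P. c b * pair u (cr b)) = 0" using le ge by simp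
    have cz: "c b = 0" if b: "b \<in> P" for b
    proof -
      have "c b * pair u (cr b) = 0" using sum_nonneg_eq_0_iff[OF finP, of "\<lambda>b. c b * pair u (cr b)"] nn z b by simp
      moreover have "pair u (cr b) > 0" using u b by auto
      ultimately show "c b = 0" by simp
    qed
    have "x = w x"
    proof
      fix i
      have "x i - w x i = (\<Sum>b\<in>P. c b * cr b i)" using fun_cong[OF c, of i] by simp
      also have "\<dots> = 0" using cz by simp
      finally show "x i = w x i" by simp
    qed
    then show False using ne by simp
  qed
qed

end

context rdat begin
definition rho :: "'n \<Rightarrow> rat" where "rho = (\<lambda>i. \<Sum>b\<in>Phi. pair (R b) v * R b i)"

lemma pair_rho: "pair rho x = Bc v x"
  unfolding rho_def Bc_def by (simp add: pair_sum1 pair_scale1)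

lemma rho_pos: "\<forall>b\<in>P. pair rho (cr b) > 0"
proof
  fix b assume b: "b \<in> P"
  then have bPhi: "b \<in> Phi" using P_sub by auto
  have "2 * pair rho (cr b) = pair (R b) v * Bc (cr b) (cr b)"
    using root_formula[OF bPhi, of v] by (simp add: pair_rho Bc_comm)
  moreover have "pair (R b) v * Bc (cr b) (cr b) > 0" using P_pos[OF b] Bc_pos[OF bPhi] by simp
  ultimately show "pair rho (cr b) > 0" by simp
qed

lemma uniq: assumes w: "w \<in> W" and x: "x \<in> Ch" and wx: "w x \<in> Ch" shows "w x = x"
proof (rule ccontr)
  assume ne: "w x \<noteq> x"
  obtain w' where w': "w' \<in> W" "w' \<circ> w = id" using W_inv[OF w] by blast
  have "w' (w x) = x" using fun_cong[OF w'(2), of x] by simp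
  then have "w' (w x) \<noteq> w x" using ne by simp
  then have "pair rho (w' (w x)) < pair rho (w x)" using dom_strict[OF w'(1) wx rho_pos] by blast
  moreover have "pair rho (w x) < pair rho x" using dom_strict[OF w x rho_pos ne] .
  ultimately show False using \<open>w' (w x) = x\<close> by simp
qed

end

context rdat begin
lemma dom_exists: "\<exists>w\<in>W. w y \<in> Ch"
proof (induction "card (A y)" arbitrary: y rule: less_induct)
  case less
  show ?case
  proof (cases "A y = {}")
    case True
    then have "id y \<in> Ch" using Ch_A by simp
    then show ?thesis using weyl_group.id by blast
  next
    case False
    then obtain b where b: "b \<in> P" "pair (R b) y < 0" unfolding A_def by auto
    obtain c where c0: "\<forall>d\<in>Delta. c d \<ge> 0" and c: "R b = (\<lambda>i. \<Sum>d\<in>Delta. c d * R d i)"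
      using decomp[OF b(1)] by blast
    have "pair (R b) y = (\<Sum>d\<in>Delta. c d * pair (R d) y)" by (subst c) (simp add: pair_sum1 pair_scale1)
    then have neg: "(\<Sum>d\<in>Delta. c d * pair (R d) y) < 0" using b by simp
    have "\<exists>d\<in>Delta. c d * pair (R d) y < 0"
    proof (rule ccontr)
      assume "\<not> ?thesis"
      then have "\<forall>d\<in>Delta. c d * pair (R d) y \<ge> 0" by (auto simp: not_less)
      then have "(\<Sum>d\<in>Delta. c d * pair (R d) y) \<ge> 0" by (intro sum_nonneg) auto
      then show False using neg by simp
    qed
    then obtain d where d: "d \<in> Delta" "c d * pair (R d) y < 0" by blast
    have "pair (R d) y < 0"
    proof (rule ccontr)
      assume "\<not> pair (R d) y < 0"
      then have "pair (R d) y \<ge> 0" by simp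
      then have "c d * pair (R d) y \<ge> 0" using c0 d(1) by simp
      then show False using d(2) by simp
    qed
    then have "card (A (sr d y)) + 1 = card (A y)" using card_down[OF d(1)] by blast
    then have "card (A (sr d y)) < card (A y)" by simp
    then obtain w where w: "w \<in> W" "w (sr d y) \<in> Ch" using less by blast
    have dPhi: "d \<in> Phi" using d Delta_Phi by auto
    have "w \<circ> sr d \<in> W" using W_comp[OF w(1) sr_W[OF dPhi]] .
    moreover have "(w \<circ> sr d) y \<in> Ch" using w(2) by simp
    ultimately show ?thesis by blast
  qed
qed

end


context rdat begin

lemma W_add: "w \<in> W \<Longrightarrow> w (\<lambda>i. x i + y i) = (\<lambda>i. w x i + w y i)"
  using W_lin[of w 1 x 1 y] by simp

lemma W_scale: "w \<in> W \<Longrightarrow> w (\<lambda>i. c * x i) = (\<lambda>i. c * w x i)"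
  using W_lin[of w c x 0 x] by simp

lemma W_zero: "w \<in> W \<Longrightarrow> w (\<lambda>i. 0) = (\<lambda>i. 0)"
  using W_scale[of w 0 "\<lambda>i. 0"] by simp

lemma W_sum: assumes w: "w \<in> W" and S: "finite S"
  shows "w (\<lambda>i. \<Sum>s\<in>S. c s * s i) = (\<lambda>i. \<Sum>s\<in>S. c s * w s i)"
  using S
proof (induction S rule: finite_induct)
  case empty then show ?case using W_zero[OF w] by simp
next
  case (insert a F)
  have "w (\<lambda>i. \<Sum>s\<in>insert a F. c s * s i) = w (\<lambda>i. c a * a i + (\<Sum>s\<in>F. c s * s i))"
    using insert by simp
  also have "\<dots> = (\<lambda>i. w (\<lambda>i. c a * a i) i + w (\<lambda>i. \<Sum>s\<in>F. c s * s i) i)" by (rule W_add[OF w])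
  also have "\<dots> = (\<lambda>i. c a * w a i + (\<Sum>s\<in>F. c s * w s i))" using insert.IH W_scale[OF w] by simp
  also have "\<dots> = (\<lambda>i. \<Sum>s\<in>insert a F. c s * w s i)" using insert by simp
  finally show ?case .
qed

lemma W_inj: assumes w: "w \<in> W" shows "inj w"
proof -
  obtain w' where w': "w' \<circ> w = id" using W_inv[OF w] by blast
  have ww: "w' (w x) = x" for x using fun_cong[OF w', of x] by simp
  show ?thesis by (rule inj_on_inverseI[of _ w']) (rule ww)
qed

lemma cone_image: assumes w: "w \<in> W" and S: "finite S"
  shows "w ` cone_gen S = cone_gen (w ` S)"
proof
  have inj: "inj_on w S" using W_inj[OF w] inj_on_subset by blast
  show "w ` cone_gen S \<subseteq> cone_gen (w ` S)"
  proof
    fix y assume "y \<in> w ` cone_gen S"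
    then obtain c where c0: "\<forall>s\<in>S. c s \<ge> 0" and y: "y = w (\<lambda>i. \<Sum>s\<in>S. c s * s i)"
      unfolding cone_gen_def by blast
    define c' where "c' = (\<lambda>t. c (inv_into S w t))"
    have "y = (\<lambda>i. \<Sum>s\<in>S. c s * w s i)" using y W_sum[OF w S] by simp
    also have "\<dots> = (\<lambda>i. \<Sum>s\<in>S. c' (w s) * w s i)" unfolding c'_def using inj by simp
    also have "\<dots> = (\<lambda>i. \<Sum>t\<in>w ` S. c' t * t i)"
      by (rule ext) (simp add: sum.reindex[OF inj])
    finally have "y = (\<lambda>i. \<Sum>t\<in>w ` S. c' t * t i)" .
    moreover have "\<forall>t\<in>w ` S. c' t \<ge> 0"
    proof
      fix t assume "t \<in> w ` S"
      then have "inv_into S w t \<in> S" by (rule inv_into_into)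
      then show "c' t \<ge> 0" unfolding c'_def using c0 by blast
    qed
    ultimately show "y \<in> cone_gen (w ` S)" unfolding cone_gen_def by blast
  qed
  show "cone_gen (w ` S) \<subseteq> w ` cone_gen S"
  proof
    fix y assume "y \<in> cone_gen (w ` S)"
    then obtain c where c0: "\<forall>t\<in>w ` S. c t \<ge> 0" and y: "y = (\<lambda>i. \<Sum>t\<in>w ` S. c t * t i)"
      unfolding cone_gen_def by blast
    have "y = (\<lambda>i. \<Sum>s\<in>S. c (w s) * w s i)" using y by (simp add: sum.reindex[OF inj])
    also have "\<dots> = w (\<lambda>i. \<Sum>s\<in>S. c (w s) * s i)" using W_sum[OF w S, of "\<lambda>s. c (w s)"] by simp
    finally have "y = w (\<lambda>i. \<Sum>s\<in>S. (c \<circ> w) s * s i)" by simp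
    moreover have "\<forall>s\<in>S. (c \<circ> w) s \<ge> 0" using c0 by simp
    ultimately show "y \<in> w ` cone_gen S" unfolding cone_gen_def by blast
  qed
qed

lemma poly_image: "w \<in> W \<Longrightarrow> polyhedral_cone C \<Longrightarrow> polyhedral_cone (w ` C)"
  unfolding polyhedral_cone_def using cone_image by blast

lemma face_image: assumes w: "w \<in> W" and G: "face_of_cone G C"
  shows "face_of_cone (w ` G) (w ` C)"
proof -
  obtain u where u0: "\<forall>x\<in>C. pair u x \<ge> 0" and Gu: "G = {x\<in>C. pair u x = 0}"
    using G unfolding face_of_cone_def by blast
  obtain w' where w': "w' \<in> W" "w' \<circ> w = id" using W_inv[OF w] by blast
  obtain u' where u': "\<forall>y. pair u (w' y) = pair u' y" using W_transp[OF w'(1)] by blast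
  have ww: "w' (w x) = x" for x using fun_cong[OF w'(2), of x] by simp
  have pu: "pair u' (w x) = pair u x" for x using u'[rule_format, of "w x"] ww by simp
  have "\<forall>y\<in>w ` C. pair u' y \<ge> 0"
  proof
    fix y assume "y \<in> w ` C"
    then obtain x where "x \<in> C" "y = w x" by blast
    then show "pair u' y \<ge> 0" using pu u0 by simp
  qed
  moreover have "w ` G = {y\<in>w ` C. pair u' y = 0}"
  proof
    show "w ` G \<subseteq> {y\<in>w ` C. pair u' y = 0}"
    proof
      fix y assume "y \<in> w ` G"
      then obtain x where "x \<in> G" "y = w x" by blast
      then show "y \<in> {y\<in>w ` C. pair u' y = 0}" using Gu pu by auto
    qed
    show "{y\<in>w ` C. pair u' y = 0} \<subseteq> w ` G"
    proof
      fix y assume "y \<in> {y\<in>w ` C. pair u' y = 0}"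
      then obtain x where x: "x \<in> C" "y = w x" "pair u' y = 0" by blast
      have "pair u x = 0" using x u'[rule_format, of y] ww by simp
      then show "y \<in> w ` G" using x Gu by blast
    qed
  qed
  ultimately show ?thesis unfolding face_of_cone_def by blast
qed

lemma face_preimage: assumes w: "w \<in> W" and F: "face_of_cone F (w ` C)"
  shows "\<exists>G. face_of_cone G C \<and> F = w ` G"
proof -
  obtain u where u0: "\<forall>y\<in>w ` C. pair u y \<ge> 0" and Fu: "F = {y\<in>w ` C. pair u y = 0}"
    using F unfolding face_of_cone_def by blast
  obtain u' where u': "\<forall>x. pair u (w x) = pair u' x" using W_transp[OF w] by blast
  define G where "G = {x\<in>C. pair u' x = 0}"
  have "\<forall>x\<in>C. pair u' x \<ge> 0" using u0 u' by simp
  then have "face_of_cone G C" unfolding face_of_cone_def G_def by blast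
  moreover have "F = w ` G"
  proof
    show "F \<subseteq> w ` G"
    proof
      fix y assume "y \<in> F"
      then obtain x where "x \<in> C" "y = w x" "pair u y = 0" using Fu by blast
      then show "y \<in> w ` G" unfolding G_def using u' by simp
    qed
    show "w ` G \<subseteq> F"
    proof
      fix y assume "y \<in> w ` G"
      then obtain x where "x \<in> C" "y = w x" "pair u' x = 0" unfolding G_def by blast
      then show "y \<in> F" unfolding Fu using u' by simp
    qed
  qed
  ultimately show ?thesis by blast
qed

end


context rdat begin

context
  fixes Sig :: "('n \<Rightarrow> rat) set set"
  assumes fanS: "fan Sig" and suppS: "support Sig = Ch"
begin

lemma Sig_Ch: "C \<in> Sig \<Longrightarrow> C \<subseteq> Ch" using suppS unfolding support_def by blast

lemma Ch_Sig: "z \<in> Ch \<Longrightarrow> \<exists>C\<in>Sig. z \<in> C" using suppS unfolding support_def by blast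

lemma inter_face: assumes C: "C \<in> Sig" and D: "D \<in> Sig" and w: "w \<in> W"
  shows "face_of_cone (C \<inter> w ` D) C"
proof -
  have "\<forall>C\<in>Sig. \<forall>D\<in>Sig. face_of_cone (C \<inter> D) C \<and> face_of_cone (C \<inter> D) D"
    using conjunct2[OF conjunct2[OF conjunct2[OF fanS[unfolded fan_def]]]] .
  then have "face_of_cone (C \<inter> D) C" using C D by blast
  then obtain u1 where u10: "\<forall>x\<in>C. pair u1 x \<ge> 0" and u1: "C \<inter> D = {x\<in>C. pair u1 x = 0}"
    unfolding face_of_cone_def by blast
  obtain u2 where u2: "\<forall>x. pair rho (w x) = pair u2 x" using W_transp[OF w] by blast
  define u where "u = (\<lambda>i. u1 i + (rho i - u2 i))"
  have pu: "pair u x = pair u1 x + (pair rho x - pair rho (w x))" for x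
    unfolding u_def pair_add1 pair_diff1 using u2 by simp
  have rho0: "\<forall>b\<in>P. pair rho (cr b) \<ge> 0" using rho_pos by (simp add: less_imp_le)
  have d0: "pair rho x - pair rho (w x) \<ge> 0" if "x \<in> C" for x
    using dom_ineq[OF w _ rho0, of x] Sig_Ch[OF C] that by auto
  have U0: "\<forall>x\<in>C. pair u x \<ge> 0"
  proof
    fix x assume "x \<in> C"
    then have "pair u1 x \<ge> 0" "pair rho x - pair rho (w x) \<ge> 0" using u10 d0 by auto
    then show "pair u x \<ge> 0" unfolding pu by simp
  qed
  have U1: "C \<inter> w ` D = {x\<in>C. pair u x = 0}"
  proof
    show "C \<inter> w ` D \<subseteq> {x\<in>C. pair u x = 0}"
    proof
      fix x assume x: "x \<in> C \<inter> w ` D"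
      then obtain z where z: "z \<in> D" "x = w z" by blast
      have "z \<in> Ch" using Sig_Ch[OF D] z(1) by (rule subsetD)
      have xC: "x \<in> C" using x by (rule IntD1)
      then have "w z \<in> C" using z(2) by simp
      then have "w z \<in> Ch" using Sig_Ch[OF C] by (rule subsetD[rotated])
      then have wz: "w z = z" using uniq[OF w \<open>z \<in> Ch\<close>] by blast
      then have "x \<in> C \<inter> D" using xC z by simp
      then have "pair u1 x = 0" using u1 by blast
      moreover have "w x = x" using wz z by simp
      ultimately show "x \<in> {x\<in>C. pair u x = 0}" using pu x by simp
    qed
    show "{x\<in>C. pair u x = 0} \<subseteq> C \<inter> w ` D"
    proof
      fix x assume x: "x \<in> {x\<in>C. pair u x = 0}"
      then have xC: "x \<in> C" by blast
      have a: "pair u1 x \<ge> 0" using u10 xC by blast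
      have b: "pair rho x - pair rho (w x) \<ge> 0" using d0 xC .
      have s: "pair u1 x + (pair rho x - pair rho (w x)) = 0" using x pu by simp
      then have "pair u1 x = 0" using a b by simp
      then have "x \<in> D" using u1 xC by blast
      have "pair rho (w x) = pair rho x" using a b s by simp
      have xCh: "x \<in> Ch" using Sig_Ch[OF C] xC by blast
      have "w x = x"
      proof (rule ccontr)
        assume "w x \<noteq> x"
        then have "pair rho (w x) < pair rho x" using dom_strict[OF w xCh rho_pos] by blast
        then show False using \<open>pair rho (w x) = pair rho x\<close> by simp
      qed
      then have "x = w x" by simp
      then have "x \<in> w ` D" using \<open>x \<in> D\<close> by (rule image_eqI)
      then show "x \<in> C \<inter> w ` D" using xC by blast
    qed
  qed
  show ?thesis unfolding face_of_cone_def by (intro exI[of _ u] conjI U0 U1)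
qed

abbreviation "WS \<equiv> weyl_fan Phi cor Sig"

lemma WS_iff: "E \<in> WS \<longleftrightarrow> (\<exists>w C. E = w ` C \<and> w \<in> W \<and> C \<in> Sig)"
  unfolding weyl_fan_def by blast

lemma WS_face_int: assumes E1: "E1 \<in> WS" and E2: "E2 \<in> WS"
  shows "face_of_cone (E1 \<inter> E2) E1"
proof -
  have "\<exists>w C. E1 = w ` C \<and> w \<in> W \<and> C \<in> Sig" using E1 by (rule WS_iff[THEN iffD1])
  then obtain w1 C where e1: "E1 = w1 ` C" "w1 \<in> W" "C \<in> Sig" by (elim exE conjE)
  have "\<exists>w C. E2 = w ` C \<and> w \<in> W \<and> C \<in> Sig" using E2 by (rule WS_iff[THEN iffD1])
  then obtain w2 D where e2: "E2 = w2 ` D" "w2 \<in> W" "D \<in> Sig" by (elim exE conjE)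
  obtain w1' where w1': "w1' \<in> W" "w1' \<circ> w1 = id" "w1 \<circ> w1' = id" using W_inv[OF e1(2)] by blast
  have a: "w1' (w1 x) = x" for x using fun_cong[OF w1'(2), of x] by simp
  have b: "w1 (w1' x) = x" for x using fun_cong[OF w1'(3), of x] by simp
  have ww: "w1' \<circ> w2 \<in> W" using W_comp[OF w1'(1) e2(2)] .
  have eq: "w1 ` C \<inter> w2 ` D = w1 ` (C \<inter> (w1' \<circ> w2) ` D)"
  proof
    show "w1 ` C \<inter> w2 ` D \<subseteq> w1 ` (C \<inter> (w1' \<circ> w2) ` D)"
    proof
      fix y assume y: "y \<in> w1 ` C \<inter> w2 ` D"
      then have y1: "y \<in> w1 ` C" and y2: "y \<in> w2 ` D" by auto
      from y1 obtain x where x: "x \<in> C" "y = w1 x" by auto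
      from y2 obtain z where z: "z \<in> D" "y = w2 z" by auto
      have "x = w1' y" using a x(2) by simp
      also have "\<dots> = (w1' \<circ> w2) z" using z(2) by simp
      finally have xz: "x = (w1' \<circ> w2) z" .
      have "x \<in> (w1' \<circ> w2) ` D" by (rule image_eqI[of x "w1' \<circ> w2" z D, OF xz z(1)])
      then have "x \<in> C \<inter> (w1' \<circ> w2) ` D" using x(1) by (rule IntI[rotated])
      then show "y \<in> w1 ` (C \<inter> (w1' \<circ> w2) ` D)" using image_eqI[of y w1 x, OF x(2)] by blast
    qed
    show "w1 ` (C \<inter> (w1' \<circ> w2) ` D) \<subseteq> w1 ` C \<inter> w2 ` D"
    proof
      fix y assume "y \<in> w1 ` (C \<inter> (w1' \<circ> w2) ` D)"
      then obtain x where x: "x \<in> C \<inter> (w1' \<circ> w2) ` D" "y = w1 x" by auto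
      then have xC: "x \<in> C" and xD: "x \<in> (w1' \<circ> w2) ` D" by auto
      from xD obtain z where z: "z \<in> D" "x = w1' (w2 z)" by auto
      have "y = w2 z" using x(2) z(2) b by simp
      have "y \<in> w1 ` C" using image_eqI[of y w1 x, OF x(2) xC] .
      moreover have "y \<in> w2 ` D" using image_eqI[of y w2 z, OF \<open>y = w2 z\<close> z(1)] .
      ultimately show "y \<in> w1 ` C \<inter> w2 ` D" by (rule IntI)
    qed
  qed
  have "face_of_cone (C \<inter> (w1' \<circ> w2) ` D) C" using inter_face[OF e1(3) e2(3) ww] .
  then have "face_of_cone (w1 ` (C \<inter> (w1' \<circ> w2) ` D)) (w1 ` C)" by (rule face_image[OF e1(2)])
  then show ?thesis unfolding e1(1) e2(1) eq .
qed

lemma WS_E: assumes "E \<in> WS" obtains w C where "E = w ` C" "w \<in> W" "C \<in> Sig"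
proof -
  have "\<exists>w C. E = w ` C \<and> w \<in> W \<and> C \<in> Sig" using assms by (rule WS_iff[THEN iffD1])
  then show ?thesis using that by (elim exE conjE)
qed

lemma WS_I: "w \<in> W \<Longrightarrow> C \<in> Sig \<Longrightarrow> w ` C \<in> WS"
  unfolding weyl_fan_def by blast

lemma WS_fan: "fan WS"
proof -
  have fin: "finite Sig" and poly: "\<forall>C\<in>Sig. polyhedral_cone C"
    and faces: "\<forall>C\<in>Sig. \<forall>F. face_of_cone F C \<longrightarrow> F \<in> Sig" using fanS unfolding fan_def by auto
  have "WS \<subseteq> (\<lambda>p. fst p ` snd p) ` (W \<times> Sig)"
  proof
    fix E assume "E \<in> WS"
    then obtain w C where "E = w ` C" "w \<in> W" "C \<in> Sig" by (rule WS_E)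
    then have "E = (\<lambda>p. fst p ` snd p) (w, C)" "(w, C) \<in> W \<times> Sig" by auto
    then show "E \<in> (\<lambda>p. fst p ` snd p) ` (W \<times> Sig)" by (rule image_eqI)
  qed
  moreover have "finite ((\<lambda>p. fst p ` snd p) ` (W \<times> Sig))" using W_finite fin by simp
  ultimately have "finite WS" using finite_subset by blast
  moreover have "\<forall>E\<in>WS. polyhedral_cone E"
  proof
    fix E assume "E \<in> WS"
    then obtain w C where "E = w ` C" "w \<in> W" "C \<in> Sig" by (rule WS_E)
    then show "polyhedral_cone E" using poly poly_image by simp
  qed
  moreover have "\<forall>E\<in>WS. \<forall>F. face_of_cone F E \<longrightarrow> F \<in> WS"
  proof (intro ballI allI impI)
    fix E F assume E: "E \<in> WS" and F: "face_of_cone F E"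
    obtain w C where e: "E = w ` C" "w \<in> W" "C \<in> Sig" using E by (rule WS_E)
    have "face_of_cone F (w ` C)" using F e(1) by simp
    then obtain G where G: "face_of_cone G C" "F = w ` G" using face_preimage[OF e(2)] by blast
    have "G \<in> Sig" using faces e(3) G(1) by blast
    then show "F \<in> WS" unfolding G(2) by (rule WS_I[OF e(2)])
  qed
  moreover have "\<forall>E1\<in>WS. \<forall>E2\<in>WS. face_of_cone (E1 \<inter> E2) E1 \<and> face_of_cone (E1 \<inter> E2) E2"
  proof (intro ballI conjI)
    fix E1 E2 assume e: "E1 \<in> WS" "E2 \<in> WS"
    show "face_of_cone (E1 \<inter> E2) E1" using WS_face_int[OF e] .
    have "face_of_cone (E2 \<inter> E1) E2" using WS_face_int[OF e(2) e(1)] .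
    then show "face_of_cone (E1 \<inter> E2) E2" by (simp add: Int_commute)
  qed
  ultimately show ?thesis unfolding fan_def by blast
qed

lemma WS_support: "support WS = UNIV"
proof -
  have "y \<in> support WS" for y
  proof -
    obtain w where w: "w \<in> W" "w y \<in> Ch" using dom_exists by blast
    obtain C where C: "C \<in> Sig" "w y \<in> C" using Ch_Sig[OF w(2)] by blast
    obtain w' where w': "w' \<in> W" "w' \<circ> w = id" using W_inv[OF w(1)] by blast
    have "y = w' (w y)" using fun_cong[OF w'(2), of y] by simp
    then have "y \<in> w' ` C" using C(2) by (rule image_eqI)
    moreover have "w' ` C \<in> WS" using WS_I[OF w'(1) C(1)] .
    ultimately show ?thesis unfolding support_def by blast
  qed
  then show ?thesis by blast
qed

end
end


context rdat begin

context
  fixes Sig :: "('n \<Rightarrow> rat) set set" and f :: "('n \<Rightarrow> rat) \<Rightarrow> rat"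
  assumes fanS: "fan Sig" and suppS: "support Sig = Ch" and scf: "strictly_convex_pl Sig f"
begin

lemma lam_ex: "C \<in> Sig \<Longrightarrow> \<exists>u. \<forall>x\<in>Ch. pair u x \<le> f x \<and> (pair u x = f x \<longleftrightarrow> x \<in> C)"
  using scf suppS unfolding strictly_convex_pl_def by simp

definition lam where "lam C = (SOME u. \<forall>x\<in>Ch. pair u x \<le> f x \<and> (pair u x = f x \<longleftrightarrow> x \<in> C))"

lemma lam: assumes C: "C \<in> Sig" shows "\<forall>x\<in>Ch. pair (lam C) x \<le> f x \<and> (pair (lam C) x = f x \<longleftrightarrow> x \<in> C)"
  unfolding lam_def using someI_ex[OF lam_ex[OF C]] .

lemma lamC: "C \<in> Sig \<Longrightarrow> z \<in> Ch \<Longrightarrow> z \<in> C \<Longrightarrow> pair (lam C) z = f z"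
  using lam by blast

definition Mc where "Mc = 1 + (\<Sum>C\<in>Sig. \<Sum>b\<in>P. \<bar>pair (lam C) (cr b)\<bar> / pair rho (cr b))"

definition gC where "gC C = (\<lambda>i. lam C i + Mc * rho i)"

lemma pair_gC: "pair (gC C) x = pair (lam C) x + Mc * pair rho x"
  unfolding gC_def pair_add1 pair_scale1 ..

lemma finSig: "finite Sig" using fanS unfolding fan_def by simp

lemma g_pos: assumes C: "C \<in> Sig" and b: "b \<in> P" shows "pair (gC C) (cr b) > 0"
proof -
  let ?t = "\<lambda>C b. \<bar>pair (lam C) (cr b)\<bar> / pair rho (cr b)"
  have pr: "pair rho (cr b) > 0" using rho_pos b by blast
  have tn: "?t C' b' \<ge> 0" if "b' \<in> P" for C' b'
    using rho_pos that by (simp add: less_imp_le)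
  have "?t C b \<le> (\<Sum>b'\<in>P. ?t C b')"
    by (rule member_le_sum[OF b]) (use tn finP in auto)
  also have "\<dots> \<le> (\<Sum>C'\<in>Sig. \<Sum>b'\<in>P. ?t C' b')"
    by (rule member_le_sum[OF C, of "\<lambda>C'. \<Sum>b'\<in>P. ?t C' b'"]) (use tn finSig in \<open>auto intro: sum_nonneg\<close>)
  finally have "Mc \<ge> 1 + ?t C b" unfolding Mc_def by simp
  then have "Mc * pair rho (cr b) \<ge> (1 + ?t C b) * pair rho (cr b)" using pr by (simp add: mult_right_mono)
  also have "(1 + ?t C b) * pair rho (cr b) = pair rho (cr b) + \<bar>pair (lam C) (cr b)\<bar>"
    using pr by (simp add: field_simps)
  finally have "Mc * pair rho (cr b) > \<bar>pair (lam C) (cr b)\<bar>" using pr by simp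
  then show ?thesis unfolding pair_gC by linarith
qed

lemma g_nonneg: "C \<in> Sig \<Longrightarrow> \<forall>b\<in>P. pair (gC C) (cr b) \<ge> 0"
  using g_pos by (simp add: less_imp_le)

definition FF where "FF y = Max ((\<lambda>p. pair (gC (snd p)) (fst p y)) ` (W \<times> Sig))"

lemma zero_Ch: "(\<lambda>i. 0) \<in> Ch" using Ch_iff by simp

lemma Sig_ne: "Sig \<noteq> {}" using Ch_Sig[OF fanS suppS zero_Ch] by blast

lemma finWS: "finite (W \<times> Sig)" using W_finite finSig by simp
lemma neWS: "W \<times> Sig \<noteq> {}" using Sig_ne weyl_group.id by blast

lemma FF_ge: assumes "w \<in> W" "C \<in> Sig" shows "pair (gC C) (w y) \<le> FF y"
proof -
  have "(w, C) \<in> W \<times> Sig" using assms by simp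
  then have "pair (gC C) (w y) \<in> (\<lambda>p. pair (gC (snd p)) (fst p y)) ` (W \<times> Sig)"
    by (rule rev_image_eqI) simp
  then show ?thesis unfolding FF_def using finWS by (intro Max_ge) auto
qed

lemma FF_in: "\<exists>w C. w \<in> W \<and> C \<in> Sig \<and> FF y = pair (gC C) (w y)"
proof -
  have "FF y \<in> (\<lambda>p. pair (gC (snd p)) (fst p y)) ` (W \<times> Sig)"
    unfolding FF_def using finWS neWS by (intro Max_in) auto
  then obtain p where "p \<in> W \<times> Sig" "FF y = pair (gC (snd p)) (fst p y)" by (rule imageE)
  then show ?thesis by (intro exI[of _ "fst p"] exI[of _ "snd p"]) auto
qed

lemma FF_Ch: assumes z: "z \<in> Ch" shows "FF z = f z + Mc * pair rho z"
proof (rule antisym)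
  obtain w C where wC: "w \<in> W" "C \<in> Sig" "FF z = pair (gC C) (w z)" using FF_in by blast
  have "pair (gC C) (w z) \<le> pair (gC C) z" using dom_ineq[OF wC(1) z g_nonneg[OF wC(2)]] .
  also have "\<dots> = pair (lam C) z + Mc * pair rho z" by (rule pair_gC)
  also have "\<dots> \<le> f z + Mc * pair rho z" using lam[OF wC(2)] z by simp
  finally show "FF z \<le> f z + Mc * pair rho z" using wC(3) by simp
next
  obtain C where C: "C \<in> Sig" "z \<in> C" using Ch_Sig[OF fanS suppS z] by blast
  have "pair (lam C) z = f z" using lam[OF C(1)] z C(2) by blast
  then have "f z + Mc * pair rho z = pair (gC C) (id z)" by (simp add: pair_gC)
  also have "\<dots> \<le> FF z" using FF_ge[OF weyl_group.id C(1)] .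
  finally show "f z + Mc * pair rho z \<le> FF z" .
qed

lemma FF_inv: assumes w: "w \<in> W" shows "FF (w y) = FF y"
proof (rule antisym)
  obtain w' C where a: "w' \<in> W" "C \<in> Sig" "FF (w y) = pair (gC C) (w' (w y))" using FF_in by blast
  have "pair (gC C) ((w' \<circ> w) y) \<le> FF y" using FF_ge[OF W_comp[OF a(1) w] a(2)] .
  then show "FF (w y) \<le> FF y" using a(3) by simp
next
  obtain wi where wi: "wi \<in> W" "wi \<circ> w = id" using W_inv[OF w] by blast
  have wiw: "wi (w y) = y" using fun_cong[OF wi(2), of y] by simp
  obtain w' C where a: "w' \<in> W" "C \<in> Sig" "FF y = pair (gC C) (w' y)" using FF_in by blast
  have "pair (gC C) ((w' \<circ> wi) (w y)) \<le> FF (w y)" using FF_ge[OF W_comp[OF a(1) wi(1)] a(2)] .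
  then show "FF y \<le> FF (w y)" using a(3) wiw by simp
qed

lemma WS_scpl: "strictly_convex_pl (WS Sig) FF"
proof -
  have c1: "\<forall>E\<in>(WS Sig). \<exists>u. \<forall>x\<in>E. FF x = pair u x"
  proof
    fix E assume "E \<in> (WS Sig)"
    then obtain w C where e: "E = w ` C" "w \<in> W" "C \<in> Sig" by (rule WS_E[OF fanS suppS])
    obtain wi where wi: "wi \<in> W" "wi \<circ> w = id" using W_inv[OF e(2)] by blast
    have wiw: "wi (w z) = z" for z using fun_cong[OF wi(2), of z] by simp
    obtain u where u: "\<forall>y. pair (gC C) (wi y) = pair u y" using W_transp[OF wi(1)] by blast
    have "FF y = pair u y" if y: "y \<in> E" for y
    proof -
      obtain z where z: "z \<in> C" "y = w z" using y e(1) by blast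
      have zCh: "z \<in> Ch" using Sig_Ch[OF fanS suppS e(3)] z(1) by blast
      have "FF y = FF z" using FF_inv[OF e(2)] z(2) by simp
      also have "\<dots> = f z + Mc * pair rho z" using FF_Ch[OF zCh] .
      also have "f z = pair (lam C) z" using lamC[OF e(3) zCh z(1)] by simp
      also have "pair (lam C) z + Mc * pair rho z = pair (gC C) z" by (simp add: pair_gC)
      also have "\<dots> = pair (gC C) (wi y)" using z(2) wiw by simp
      also have "\<dots> = pair u y" using u by simp
      finally show ?thesis .
    qed
    then show "\<exists>u. \<forall>x\<in>E. FF x = pair u x" by blast
  qed
  have c2: "\<forall>x\<in>support (WS Sig). \<forall>y\<in>support (WS Sig). \<forall>t::rat. 0 \<le> t \<and> t \<le> 1 \<longrightarrow>
         FF (\<lambda>i. t * x i + (1 - t) * y i) \<le> t * FF x + (1 - t) * FF y"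
  proof (intro ballI allI impI)
    fix x y and t :: rat assume t: "0 \<le> t \<and> t \<le> 1"
    obtain w C where a: "w \<in> W" "C \<in> Sig" "FF (\<lambda>i. t * x i + (1 - t) * y i) = pair (gC C) (w (\<lambda>i. t * x i + (1 - t) * y i))"
      using FF_in by blast
    have "pair (gC C) (w (\<lambda>i. t * x i + (1 - t) * y i)) = pair (gC C) (\<lambda>i. t * w x i + (1 - t) * w y i)"
      using W_lin[OF a(1)] by simp
    also have "\<dots> = t * pair (gC C) (w x) + (1 - t) * pair (gC C) (w y)"
      unfolding pair_add2 pair_scale2 ..
    also have "\<dots> \<le> t * FF x + (1 - t) * FF y"
      using FF_ge[OF a(1) a(2), of x] FF_ge[OF a(1) a(2), of y] t
      by (intro add_mono mult_left_mono) auto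
    finally show "FF (\<lambda>i. t * x i + (1 - t) * y i) \<le> t * FF x + (1 - t) * FF y" using a(3) by simp
  qed
  have c3: "\<forall>E\<in>(WS Sig). \<exists>u. \<forall>x\<in>support (WS Sig). pair u x \<le> FF x \<and> (pair u x = FF x \<longleftrightarrow> x \<in> E)"
  proof
    fix E assume "E \<in> (WS Sig)"
    then obtain w C where e: "E = w ` C" "w \<in> W" "C \<in> Sig" by (rule WS_E[OF fanS suppS])
    obtain wi where wi: "wi \<in> W" "wi \<circ> w = id" "w \<circ> wi = id" using W_inv[OF e(2)] by blast
    have wiw: "wi (w z) = z" for z using fun_cong[OF wi(2), of z] by simp
    have wwi: "w (wi z) = z" for z using fun_cong[OF wi(3), of z] by simp
    obtain u where u: "\<forall>y. pair (gC C) (wi y) = pair u y" using W_transp[OF wi(1)] by blast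
    have le: "pair u y \<le> FF y" for y using FF_ge[OF wi(1) e(3), of y] u by simp
    have eq_iff: "pair u y = FF y \<longleftrightarrow> y \<in> E" for y
    proof
      assume y: "y \<in> E"
      obtain z where z: "z \<in> C" "y = w z" using y e(1) by blast
      have zCh: "z \<in> Ch" using Sig_Ch[OF fanS suppS e(3)] z(1) by blast
      have "FF y = FF z" using FF_inv[OF e(2)] z(2) by simp
      also have "\<dots> = f z + Mc * pair rho z" using FF_Ch[OF zCh] .
      also have "f z = pair (lam C) z" using lamC[OF e(3) zCh z(1)] by simp
      also have "pair (lam C) z + Mc * pair rho z = pair (gC C) z" by (simp add: pair_gC)
      also have "\<dots> = pair (gC C) (wi y)" using z(2) wiw by simp
      also have "\<dots> = pair u y" using u by simp
      finally show "pair u y = FF y" by simp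
    next
      assume h: "pair u y = FF y"
      define z where "z = wi y"
      have yz: "y = w z" unfolding z_def using wwi by simp
      have hz: "pair (gC C) z = FF z" using h u FF_inv[OF e(2), of z] yz unfolding z_def by simp
      obtain w1 where w1: "w1 \<in> W" "w1 z \<in> Ch" using dom_exists by blast
      obtain w1' where w1': "w1' \<in> W" "w1' \<circ> w1 = id" using W_inv[OF w1(1)] by blast
      have zz: "w1' (w1 z) = z" using fun_cong[OF w1'(2), of z] by simp
      have Fz: "FF z = f (w1 z) + Mc * pair rho (w1 z)" using FF_inv[OF w1(1), of z] FF_Ch[OF w1(2)] by simp
      have "pair (lam C) (w1 z) \<le> f (w1 z)" using lam[OF e(3)] w1(2) by blast
      then have ge: "pair (gC C) (w1 z) \<le> FF z" using Fz by (simp add: pair_gC)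
      have same: "w1 z = z"
      proof (rule ccontr)
        assume ne: "w1 z \<noteq> z"
        then have "w1' (w1 z) \<noteq> w1 z" using zz by simp
        then have "pair (gC C) (w1' (w1 z)) < pair (gC C) (w1 z)"
          using dom_strict[OF w1'(1) w1(2)] g_pos[OF e(3)] by blast
        then have "pair (gC C) z < FF z" using zz ge by simp
        then show False using hz by simp
      qed
      then have zCh: "z \<in> Ch" using w1(2) by simp
      have "pair (lam C) z = f z" using hz FF_Ch[OF zCh] by (simp add: pair_gC)
      then have "z \<in> C" using lam[OF e(3)] zCh by blast
      then show "y \<in> E" using yz e(1) by blast
    qed
    show "\<exists>u. \<forall>x\<in>support (WS Sig). pair u x \<le> FF x \<and> (pair u x = FF x \<longleftrightarrow> x \<in> E)"
      using le eq_iff by blast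
  qed
  show ?thesis unfolding strictly_convex_pl_def using c1 c2 c3 by blast
qed

lemma WS_normal: "normal_fan (WS Sig)"
proof -
  have "convex_set (support (WS Sig))" unfolding WS_support[OF fanS suppS] convex_set_def by simp
  then show ?thesis unfolding normal_fan_def using WS_fan[OF fanS suppS] WS_scpl by blast
qed

end
end


theorem corollary7p3:
  fixes Phi :: "('n::finite \<Rightarrow> int) set"
    and cor :: "('n \<Rightarrow> int) \<Rightarrow> ('n \<Rightarrow> int)"
    and v :: "'n \<Rightarrow> rat"
    and Sig :: "('n \<Rightarrow> rat) set set"
  assumes "reduced_root_datum Phi cor"
    and "regular Phi v"
    and "fan Sig"
    and "\<forall>C\<in>Sig. simplicial_cone C"
    and "support Sig = pos_chamber Phi v"
    and "normal_fan Sig"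
  shows "normal_fan (weyl_fan Phi cor Sig)"
proof -
  interpret rdat Phi cor v using assms(1,2) by unfold_locales
  obtain f where f: "strictly_convex_pl Sig f" using assms(6) unfolding normal_fan_def by blast
  show ?thesis using WS_normal[OF assms(3) assms(5) f] .
qed

end
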